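(* Let $\Omega\subset\mathbb{R}^2$ be the unit disc, with polar coordinates $(r,\phi)$. For $r_1\in(0,1)$ and $\sigma_1>0$ let $R_{\sigma_1,r_1}:H^{-1/2}(\partial\Omega)\to H^{1/2}(\partial\Omega)$ be the Neumann-to-Dirichlet map of the core-shell problem and let $R:H^{-1/2}(\partial\Omega)\to H^{1/2}(\partial\Omega)$ be the Neumann-to-Dirichlet map of the homogeneous disc problem (both defined in the context). Then: (1) for any fixed $r_1\in(0,1)$, $\|R_{\sigma_1,r_1}-R\|\to 0$ as $\sigma_1\to 1$; (2) for any fixed $\sigma_1>0$, $\|R_{\sigma_1,r_1}-R\|\to 0$ as $r_1\to 0$. Here $\|\cdot\|$ denotes the operator norm from $H^{-1/2}(\partial\Omega)$ to $H^{1/2}(\partial\Omega)$.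
   Context: $I_n,K_n$ denote the modified Bessel functions of the first and second kind of order $n$. For $g\in H^{-1/2}(\partial\Omega)$ write $g_n=(g,e^{in\phi})$ for its Fourier coefficients. Core-shell problem: given $r_1\in(0,1)$, $\sigma_1>0$, $\psi$ solves $\frac{1}{r}\partial_r(r\partial_r\psi)+\frac{1}{r^2}\partial_\phi^2\psi-\sigma_1^{-1}\psi=0$ for $0<r<r_1$; $\frac{1}{r}\partial_r(r\partial_r\psi)+\frac{1}{r^2}\partial_\phi^2\psi-\psi=0$ for $r_1<r<1$; $\psi|_{r=r_1}^+=\psi|_{r=r_1}^-$, $\partial_r\psi|_{r=r_1}^+=\sigma_1\partial_r\psi|_{r=r_1}^-$ (where $+$/$-$ denote limits from outside/inside the circle $r=r_1$); $\partial_r\psi|_{r=1}=g$; $\psi$ bounded at $r=0$. Then $R_{\sigma_1,r_1}(g)=\psi|_{r=1}$. Explicitly, $R_{\sigma_1,r_1}(g)=\sum_{n\in\mathbb{Z}}\frac{\rho_n K_n(1)-I_n(1)}{\rho_n K_n'(1)-I_n'(1)}g_ne^{in\phi}$, with $\rho_n=\frac{\sigma_1I_n'(r_1/\sqrt{\sigma_1})I_n(r_1)-I_n(r_1/\sqrt{\sigma_1})I_n'(r_1)}{\sigma_1I_n'(r_1/\sqrt{\sigma_1})K_n(r_1)-I_n(r_1/\sqrt{\sigma_1})K_n'(r_1)}$. Homogeneous problem: $\Psi$ solves $\frac{1}{r}\partial_r(r\partial_r\Psi)+\frac{1}{r^2}\partial_\phi^2\Psi-\Psi=0$ for $0<r<1$,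 $\partial_r\Psi|_{r=1}=g$, $\Psi$ bounded at $r=0$; $R(g)=\Psi|_{r=1}=\sum_{n\in\mathbb{Z}}\frac{I_n(1)}{I_n'(1)}g_ne^{in\phi}$. *)

theory Defs
  imports "HOL-Analysis.Analysis"
begin

definition bessel_I :: "int \<Rightarrow> real \<Rightarrow> real" where
  "bessel_I n x = (\<Sum>k. (x / 2) ^ (2 * k + nat \<bar>n\<bar>) / (fact k * fact (k + nat \<bar>n\<bar>)))"

text \<open>K_n via the standard integral representation, valid for x > 0.\<close>
definition bessel_K :: "int \<Rightarrow> real \<Rightarrow> real" where
  "bessel_K n x = integral {0..} (\<lambda>t. exp (- x * cosh t) * cosh (real_of_int n * t))"

definition bessel_I' :: "int \<Rightarrow> real \<Rightarrow> real" where
  "bessel_I' n x = deriv (bessel_I n) x"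

definition bessel_K' :: "int \<Rightarrow> real \<Rightarrow> real" where
  "bessel_K' n x = deriv (bessel_K n) x"

text \<open>Boundary data are represented by their Fourier coefficients g_n = (g, exp(i n phi)), n integer.\<close>

definition rho :: "real \<Rightarrow> real \<Rightarrow> int \<Rightarrow> real" where
  "rho \<sigma>1 r1 n =
     (\<sigma>1 * bessel_I' n (r1 / sqrt \<sigma>1) * bessel_I n r1 - bessel_I n (r1 / sqrt \<sigma>1) * bessel_I' n r1) /
     (\<sigma>1 * bessel_I' n (r1 / sqrt \<sigma>1) * bessel_K n r1 - bessel_I n (r1 / sqrt \<sigma>1) * bessel_K' n r1)"

definition NtD_core :: "real \<Rightarrow> real \<Rightarrow> (int \<Rightarrow> complex) \<Rightarrow> (int \<Rightarrow> complex)" where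
  "NtD_core \<sigma>1 r1 g = (\<lambda>n. complex_of_real
      ((rho \<sigma>1 r1 n * bessel_K n 1 - bessel_I n 1) / (rho \<sigma>1 r1 n * bessel_K' n 1 - bessel_I' n 1)) * g n)"

definition NtD_hom :: "(int \<Rightarrow> complex) \<Rightarrow> (int \<Rightarrow> complex)" where
  "NtD_hom g = (\<lambda>n. complex_of_real (bessel_I n 1 / bessel_I' n 1) * g n)"

definition in_Hs :: "real \<Rightarrow> (int \<Rightarrow> complex) \<Rightarrow> bool" where
  "in_Hs s g \<longleftrightarrow> (\<lambda>n. (1 + (real_of_int n)\<^sup>2) powr s * (cmod (g n))\<^sup>2) summable_on UNIV"

definition Hs_norm :: "real \<Rightarrow> (int \<Rightarrow> complex) \<Rightarrow> real" where
  "Hs_norm s g = sqrt (\<Sum>\<^sub>\<infinity>n\<in>UNIV. (1 + (real_of_int n)\<^sup>2) powr s * (cmod (g n))\<^sup>2)"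

definition opnorm_Hm_H :: "((int \<Rightarrow> complex) \<Rightarrow> (int \<Rightarrow> complex)) \<Rightarrow> real" where
  "opnorm_Hm_H T = Sup {Hs_norm (1/2) (T g) / Hs_norm (-1/2) g | g. in_Hs (-1/2) g \<and> (\<exists>n. g n \<noteq> 0)}"

end

theory Submission
  imports Defs
begin


lemma opnorm_bound:
  fixes \<mu> :: "int \<Rightarrow> real" and \<epsilon> :: real
  assumes H: "\<And>n. sqrt (1 + (real_of_int n)\<^sup>2) * \<bar>\<mu> n\<bar> \<le> \<epsilon>"
  shows "0 \<le> opnorm_Hm_H (\<lambda>g n. complex_of_real (\<mu> n) * g n) \<and>
         opnorm_Hm_H (\<lambda>g n. complex_of_real (\<mu> n) * g n) \<le> \<epsilon>"
proof -
  have eps: "0 \<le> \<epsilon>" using H[of 0] by (smt (verit) mult_nonneg_nonneg real_sqrt_ge_zero abs_ge_zero zero_le_power2)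
  define A where "A = {Hs_norm (1/2) ((\<lambda>g n. complex_of_real (\<mu> n) * g n) g) / Hs_norm (-1/2) g | g. in_Hs (-1/2) g \<and> (\<exists>n. g n \<noteq> 0)}"
  have elem: "0 \<le> Hs_norm (1/2) (\<lambda>n. complex_of_real (\<mu> n) * g n) / Hs_norm (-1/2) g \<and>
       Hs_norm (1/2) (\<lambda>n. complex_of_real (\<mu> n) * g n) / Hs_norm (-1/2) g \<le> \<epsilon>"
    if g: "in_Hs (-1/2) g" for g
  proof -
    define a where "a = (\<lambda>n::int. (1 + (real_of_int n)\<^sup>2) powr (-1/2) * (cmod (g n))\<^sup>2)"
    define b where "b = (\<lambda>n::int. (1 + (real_of_int n)\<^sup>2) powr (1/2) * (cmod (complex_of_real (\<mu> n) * g n))\<^sup>2)"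
    have asum: "a summable_on UNIV" using g unfolding in_Hs_def a_def by simp
    have ba: "b n \<le> \<epsilon>\<^sup>2 * a n" for n
    proof -
      define w where "w = 1 + (real_of_int n)\<^sup>2"
      have w: "w > 0" unfolding w_def by (smt (verit) zero_le_power2)
      have p1: "w powr (1/2) = sqrt w" using w by (simp add: powr_half_sqrt)
      have p2: "w powr (-1/2) = 1 / sqrt w" using w by (simp add: powr_minus_divide powr_half_sqrt)
      have hw: "sqrt w * \<bar>\<mu> n\<bar> \<le> \<epsilon>" using H[of n] unfolding w_def .
      have "(sqrt w * \<bar>\<mu> n\<bar>)\<^sup>2 \<le> \<epsilon>\<^sup>2"
        by (rule power_mono[OF hw]) (use w in simp)
      then have "w * (\<mu> n)\<^sup>2 \<le> \<epsilon>\<^sup>2" using w by (simp add: power_mult_distrib)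
      then have "sqrt w * (\<mu> n)\<^sup>2 \<le> \<epsilon>\<^sup>2 / sqrt w"
      proof -
        have sw: "sqrt w > 0" using w by simp
        have "sqrt w * (\<mu> n)\<^sup>2 = (w * (\<mu> n)\<^sup>2) / sqrt w"
          using sw w by (simp add: field_simps)
        also have "\<dots> \<le> \<epsilon>\<^sup>2 / sqrt w" using sw \<open>w * (\<mu> n)\<^sup>2 \<le> \<epsilon>\<^sup>2\<close> by (simp add: divide_right_mono)
        finally show ?thesis .
      qed
      then have "sqrt w * (\<mu> n)\<^sup>2 * (cmod (g n))\<^sup>2 \<le> \<epsilon>\<^sup>2 / sqrt w * (cmod (g n))\<^sup>2"
        by (metis (no_types) mult_right_mono zero_le_power2 times_divide_eq_left)
      then show ?thesis unfolding a_def b_def using p1 p2 w_def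
        by (simp add: norm_mult power_mult_distrib mult_ac)
    qed
    have b0: "0 \<le> b n" for n unfolding b_def by simp
    have bsum: "b summable_on UNIV"
      by (rule summable_on_comparison_test[OF summable_on_cmult_right[OF asum, of "\<epsilon>\<^sup>2"]]) (use ba b0 in auto)
    have "infsum b UNIV \<le> infsum (\<lambda>n. \<epsilon>\<^sup>2 * a n) UNIV"
      by (rule infsum_mono[OF bsum summable_on_cmult_right[OF asum]]) (use ba in auto)
    also have "\<dots> = \<epsilon>\<^sup>2 * infsum a UNIV" by (simp add: infsum_cmult_right')
    finally have le: "infsum b UNIV \<le> \<epsilon>\<^sup>2 * infsum a UNIV" .
    have num: "Hs_norm (1/2) (\<lambda>n. complex_of_real (\<mu> n) * g n) = sqrt (infsum b UNIV)"
      unfolding Hs_norm_def b_def by simp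
    have den: "Hs_norm (-1/2) g = sqrt (infsum a UNIV)"
      unfolding Hs_norm_def a_def by simp
    have "sqrt (infsum b UNIV) \<le> sqrt (\<epsilon>\<^sup>2 * infsum a UNIV)" using le by simp
    also have "\<dots> = \<epsilon> * sqrt (infsum a UNIV)" using eps by (simp add: real_sqrt_mult)
    finally have "sqrt (infsum b UNIV) \<le> \<epsilon> * sqrt (infsum a UNIV)" .
    moreover have "0 \<le> infsum a UNIV" by (rule infsum_nonneg) (simp add: a_def)
    moreover have "0 \<le> infsum b UNIV" by (rule infsum_nonneg) (simp add: b0)
    ultimately show ?thesis unfolding num den
      by (cases "sqrt (infsum a UNIV) = 0") (auto simp: divide_le_eq eps mult.commute)
  qed
  define g0 :: "int \<Rightarrow> complex" where "g0 = (\<lambda>n. if n = 0 then 1 else 0)"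
  have "in_Hs (-1/2) g0" unfolding in_Hs_def g0_def
    by (subst summable_on_cong_neutral[where T = "{0}"]) auto
  then have g0A: "Hs_norm (1/2) (\<lambda>n. complex_of_real (\<mu> n) * g0 n) / Hs_norm (-1/2) g0 \<in> A"
    unfolding A_def g0_def by force
  have Ane: "A \<noteq> {}" using g0A by blast
  have Aub: "\<And>x. x \<in> A \<Longrightarrow> x \<le> \<epsilon>" unfolding A_def using elem by blast
  have bdd: "bdd_above A" unfolding bdd_above_def using Aub by blast
  have "Sup A \<le> \<epsilon>" by (rule cSup_least[OF Ane]) (use Aub in auto)
  moreover have "0 \<le> Sup A"
    using elem[OF \<open>in_Hs (-1/2) g0\<close>] cSup_upper[OF g0A bdd] by linarith
  ultimately show ?thesis unfolding opnorm_Hm_H_def A_def by simp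
qed



definition Sc :: "nat \<Rightarrow> nat \<Rightarrow> real" where
  "Sc k j = 1 / (fact j * fact (j + k))"

definition S :: "nat \<Rightarrow> real \<Rightarrow> real" where
  "S k y = (\<Sum>j. Sc k j * y ^ j)"

definition Sd :: "nat \<Rightarrow> real \<Rightarrow> real" where
  "Sd k y = (\<Sum>j. diffs (Sc k) j * y ^ j)"

lemma Sc_pos: "0 < Sc k j" by (simp add: Sc_def)

lemma S_summable: "summable (\<lambda>j. Sc k j * y ^ j)"
proof (rule summable_comparison_test'[OF summable_exp[of "\<bar>y\<bar>"]])
  fix n :: nat
  show "norm (Sc k n * y ^ n) \<le> inverse (fact n) * \<bar>y\<bar> ^ n"
  proof -
    have "Sc k n \<le> 1 / fact n"
      unfolding Sc_def by (simp add: divide_simps)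
    then have "Sc k n * \<bar>y\<bar> ^ n \<le> 1 / fact n * \<bar>y\<bar> ^ n"
      by (rule mult_right_mono) simp
    then show ?thesis
      using Sc_pos[of k n] by (simp add: abs_mult power_abs divide_inverse)
  qed
qed

lemma Sd_summable: "summable (\<lambda>j. diffs (Sc k) j * y ^ j)"
  by (rule termdiff_converges_all) (rule S_summable)

lemma Sdd_summable: "summable (\<lambda>j. diffs (diffs (Sc k)) j * y ^ j)"
  by (rule termdiff_converges_all) (rule Sd_summable)

lemma S_deriv: "(S k has_real_derivative Sd k y) (at y)"
  unfolding S_def Sd_def by (rule termdiffs_strong_converges_everywhere) (rule S_summable)

lemma Sd_deriv: "(Sd k has_real_derivative (\<Sum>j. diffs (diffs (Sc k)) j * y ^ j)) (at y)"
  unfolding Sd_def by (rule termdiffs_strong_converges_everywhere) (rule Sd_summable)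

lemma S_cont: "isCont (S k) y" using S_deriv DERIV_isCont by blast
lemma Sd_cont: "isCont (Sd k) y" using Sd_deriv DERIV_isCont by blast

lemma diffs_Sc: "diffs (Sc k) j = Sc k j / (j + k + 1)"
proof -
  have a: "(fact (Suc j) :: real) = (j+1) * fact j" by (simp add: algebra_simps)
  have b: "(fact (Suc j + k) :: real) = (j+k+1) * fact (j+k)"
    by (simp add: algebra_simps)
  have a': "real (Suc j) / fact (Suc j) = 1 / fact j" by (simp add: a)
  have "diffs (Sc k) j = real (Suc j) / fact (Suc j) * (1 / fact (Suc j + k))"
    by (simp add: diffs_def Sc_def)
  also have "\<dots> = 1 / fact j * (1 / ((j+k+1) * fact (j+k)))" by (simp only: a' b)
  also have "\<dots> = Sc k j / (j + k + 1)" by (simp add: Sc_def algebra_simps)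
  finally show ?thesis .
qed

lemma S_ge: "0 \<le> y \<Longrightarrow> Sc k 0 \<le> S k y"
proof -
  assume y: "0 \<le> y"
  have "\<And>n. 0 \<le> Sc k n * y^n" using Sc_pos y by (simp add: less_imp_le)
  then show ?thesis unfolding S_def using sum_le_suminf[OF S_summable, of "{0}" k y] by auto
qed

lemma S_pos: "0 \<le> y \<Longrightarrow> 0 < S k y"
  using S_ge[of y k] Sc_pos[of k 0] by linarith

lemma Sd_pos: "0 \<le> y \<Longrightarrow> 0 < Sd k y"
proof -
  assume y: "0 \<le> y"
  have "diffs (Sc k) 0 * y ^ 0 \<le> Sd k y"
    unfolding Sd_def using sum_le_suminf[OF Sd_summable, of "{0}" k y] y
    by (auto simp: diffs_Sc Sc_pos less_imp_le)
  moreover have "0 < diffs (Sc k) 0" by (simp add: diffs_Sc Sc_pos)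
  ultimately show ?thesis by simp
qed

lemma Sd_le: "0 \<le> y \<Longrightarrow> Sd k y \<le> S k y / (k + 1)"
proof -
  assume y: "0 \<le> y"
  have "Sd k y \<le> (\<Sum>j. Sc k j * y ^ j / (k + 1))"
    unfolding Sd_def
  proof (rule suminf_le)
    fix j
    have e: "diffs (Sc k) j * y ^ j = Sc k j * y ^ j / (j + k + 1)" by (simp add: diffs_Sc)
    have "Sc k j * y ^ j / (j + k + 1) \<le> Sc k j * y ^ j / (k + 1)"
      using Sc_pos[of k j] y by (intro divide_left_mono) auto
    then show "diffs (Sc k) j * y ^ j \<le> Sc k j * y ^ j / (k + 1)"
      using e by simp
  qed (rule Sd_summable, rule summable_divide[OF S_summable])
  also have "\<dots> = S k y / (k + 1)" unfolding S_def
    by (rule suminf_divide[OF S_summable])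
  finally show ?thesis .
qed

lemma S_mono: "0 \<le> y1 \<Longrightarrow> y1 \<le> y2 \<Longrightarrow> S k y1 \<le> S k y2"
  unfolding S_def
  by (rule suminf_le) (auto intro!: mult_left_mono power_mono S_summable simp: Sc_pos less_imp_le)

lemma bessel_I_eq: "bessel_I (int k) x = (x/2)^k * S k (x\<^sup>2/4)"
proof -
  have "(\<lambda>j. (x / 2) ^ (2 * j + nat \<bar>int k\<bar>) / (fact j * fact (j + nat \<bar>int k\<bar>))) =
        (\<lambda>j. (x/2)^k * (Sc k j * (x\<^sup>2/4) ^ j))"
  proof (rule ext)
    fix j
    have "(x/2)^(2*j+k) = (x/2)^k * ((x/2)^2)^j" by (simp add: power_add power_mult)
    also have "(x/2)^2 = x\<^sup>2/4" by (simp add: power_divide)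
    finally show "(x / 2) ^ (2 * j + nat \<bar>int k\<bar>) / (fact j * fact (j + nat \<bar>int k\<bar>)) =
        (x/2)^k * (Sc k j * (x\<^sup>2/4) ^ j)" by (simp add: Sc_def)
  qed
  then show ?thesis unfolding bessel_I_def S_def
    by (simp add: suminf_mult[OF S_summable])
qed

lemma bessel_I_fun: "bessel_I (int k) = (\<lambda>x. (x/2)^k * S k (x\<^sup>2/4))"
  using bessel_I_eq by blast

definition Idf :: "nat \<Rightarrow> real \<Rightarrow> real" where
  "Idf k x = real k * (x/2)^(k - 1) * (1/2) * S k (x\<^sup>2/4) + (x/2)^k * (Sd k (x\<^sup>2/4) * (x/2))"

lemma I_deriv: "(bessel_I (int k) has_real_derivative Idf k x) (at x)"
  unfolding bessel_I_fun Idf_def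
  by (auto intro!: derivative_eq_intros DERIV_chain2[OF S_deriv])

lemma bessel_I'_eq: "bessel_I' (int k) x = Idf k x"
  unfolding bessel_I'_def using I_deriv DERIV_imp_deriv by blast

lemma Idf_cont: "isCont (Idf k) x"
  unfolding Idf_def
  apply (intro continuous_intros isCont_o2[OF _ S_cont] isCont_o2[OF _ Sd_cont])
  apply simp_all
  done

lemma Idf_pos_form:
  assumes x: "0 < x"
  shows "Idf k x = real k / x * bessel_I (int k) x + (x/2)^(k+1) * Sd k (x\<^sup>2/4)"
proof (cases k)
  case 0 then show ?thesis by (simp add: Idf_def bessel_I_eq field_simps)
next
  case (Suc m)
  have p: "(x/2)^k = (x/2) * (x/2)^m" using Suc by simp
  have q: "(x/2)^(k+1) = (x/2) * (x/2)^k" by simp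
  have km: "k - 1 = m" using Suc by simp
  show ?thesis unfolding Idf_def bessel_I_eq km q
    using x by (simp only: p) (simp add: field_simps)
qed

lemma I_pos: "0 < x \<Longrightarrow> 0 < bessel_I (int k) x"
  by (simp add: bessel_I_eq S_pos)

lemma Idf_lower: "0 < x \<Longrightarrow> real k / x * bessel_I (int k) x \<le> Idf k x"
  by (simp add: Idf_pos_form Sd_pos less_imp_le)

lemma Idf_pos: "0 < x \<Longrightarrow> 0 < Idf k x"
proof -
  assume x: "0 < x"
  have "0 \<le> real k / x * bessel_I (int k) x" using x I_pos[OF x, of k] by simp
  moreover have "0 < (x/2)^(k+1) * Sd k (x\<^sup>2/4)" using x by (simp add: Sd_pos)
  ultimately show ?thesis by (simp add: Idf_pos_form x)
qed

lemma Idf_upper: "0 < x \<Longrightarrow> Idf k x \<le> (real k / x + x / 2) * bessel_I (int k) x"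
proof -
  assume x: "0 < x"
  have "Sd k (x\<^sup>2/4) \<le> S k (x\<^sup>2/4) / (k+1)" by (rule Sd_le) simp
  also have "\<dots> \<le> S k (x\<^sup>2/4)" using S_pos[of "x\<^sup>2/4" k] by (simp add: divide_le_eq)
  finally have "(x/2)^(k+1) * Sd k (x\<^sup>2/4) \<le> (x/2)^(k+1) * S k (x\<^sup>2/4)"
    using x by (simp add: mult_left_mono)
  also have "\<dots> = x/2 * bessel_I (int k) x" by (simp add: bessel_I_eq)
  finally show ?thesis by (simp add: Idf_pos_form x algebra_simps)
qed

lemma I_scale: "0 < r \<Longrightarrow> r \<le> 1 \<Longrightarrow> bessel_I (int k) r \<le> r ^ k * bessel_I (int k) 1"
proof -
  assume r: "0 < r" "r \<le> 1"
  have "S k (r\<^sup>2/4) \<le> S k (1/4)"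
    using r by (intro S_mono) (auto simp: power_le_one)
  then have "(1/2)^k * S k (r\<^sup>2/4) \<le> (1/2)^k * S k (1/4)" by (simp add: mult_left_mono)
  then show ?thesis using r by (simp add: bessel_I_eq power_divide mult_left_mono field_simps)
qed



definition goodw :: "(real \<Rightarrow> real) \<Rightarrow> bool" where
  "goodw w \<longleftrightarrow> continuous_on UNIV w \<and> (\<exists>C M. \<forall>t\<ge>0. \<bar>w t\<bar> \<le> C * exp (M * t))"

definition Kw :: "(real \<Rightarrow> real) \<Rightarrow> real \<Rightarrow> real" where
  "Kw w x = integral {0..} (\<lambda>t. exp (- x * cosh t) * w t)"

lemma cosh_le_exp_abs: "cosh (y::real) \<le> exp \<bar>y\<bar>"
  unfolding cosh_field_def by (cases "y \<ge> 0") auto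

lemma abs_sinh_le_exp_abs: "\<bar>sinh (y::real)\<bar> \<le> exp \<bar>y\<bar>"
proof -
  have "exp y \<le> exp \<bar>y\<bar>" "exp (-y) \<le> exp \<bar>y\<bar>" "0 < exp y" "0 < exp (-y)" by auto
  then have "(exp y - exp (-y)) / 2 \<le> exp \<bar>y\<bar>" "-((exp y - exp (-y)) / 2) \<le> exp \<bar>y\<bar>"
    by argo+
  then show ?thesis unfolding sinh_field_def abs_le_iff by blast
qed

lemma cosh_ge_sq: "0 \<le> t \<Longrightarrow> t\<^sup>2/4 \<le> cosh (t::real)"
proof -
  assume t: "0 \<le> t"
  have "1 + t + t\<^sup>2/2 \<le> exp t" using exp_lower_Taylor_quadratic[OF t] .
  moreover have "0 < exp (-t)" by simp
  ultimately have "t\<^sup>2 \<le> exp t * 2 + exp (- t) * 2" using t by linarith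
  then show ?thesis unfolding cosh_field_def by simp
qed

lemma cosh_pos': "0 < cosh (t::real)"
  by (smt (verit) cosh_real_ge_1)

lemma exp_decay:
  fixes x t M :: real
  assumes x: "0 < x" and t: "0 \<le> t"
  shows "exp (M*t - x * cosh t) \<le> exp ((M+1)\<^sup>2/x) * exp (-t)"
proof -
  have "x * (t\<^sup>2/4) \<le> x * cosh t" using cosh_ge_sq[OF t] x by simp
  moreover have "0 \<le> (x*t/2 - (M+1))\<^sup>2" by simp
  then have "(M+1)*t - x*t\<^sup>2/4 \<le> (M+1)\<^sup>2/x"
    using x by (simp add: field_simps power2_eq_square)
  ultimately have "M*t - x * cosh t \<le> (M+1)\<^sup>2/x + (-t)" by (simp add: algebra_simps)
  then show ?thesis by (simp flip: exp_add)
qed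

lemma goodw_bound:
  assumes w: "goodw w" and x: "0 < x"
  shows "\<exists>B. \<forall>t\<ge>0. \<bar>exp (- x * cosh t) * w t\<bar> \<le> B * exp (-t)"
proof -
  obtain C M where CM: "\<And>t. t \<ge> 0 \<Longrightarrow> \<bar>w t\<bar> \<le> C * exp (M * t)" using w unfolding goodw_def by blast
  have C: "0 \<le> C" using CM[of 0] by simp
  show ?thesis
  proof (intro exI allI impI)
    fix t :: real assume t: "0 \<le> t"
    have "\<bar>exp (- x * cosh t) * w t\<bar> = exp (- x * cosh t) * \<bar>w t\<bar>" by (simp add: abs_mult)
    also have "\<dots> \<le> exp (- x * cosh t) * (C * exp (M * t))" using CM[OF t] by (simp add: mult_left_mono)
    also have "\<dots> = C * exp (M*t - x * cosh t)" by (simp add: exp_diff exp_minus field_simps)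
    also have "\<dots> \<le> C * (exp ((M+1)\<^sup>2/x) * exp (-t))" using exp_decay[OF x t, of M] C by (simp add: mult_left_mono)
    finally show "\<bar>exp (- x * cosh t) * w t\<bar> \<le> C * exp ((M+1)\<^sup>2/x) * exp (-t)" by (simp add: mult_ac)
  qed
qed

lemma exp_minus_integrable: "(\<lambda>t. B * exp (- t)) integrable_on {0::real..}"
  using integrable_on_cmult_left[OF integrable_on_exp_minus_to_infinity[of 1 0], of B] by simp

lemma Kw_absint:
  assumes w: "goodw w" and x: "0 < x"
  shows "(\<lambda>t. exp (- x * cosh t) * w t) absolutely_integrable_on {0..}"
proof -
  obtain B where B: "\<And>t. t \<ge> 0 \<Longrightarrow> \<bar>exp (- x * cosh t) * w t\<bar> \<le> B * exp (-t)"
    using goodw_bound[OF w x] by blast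
  have cont: "continuous_on {0..} (\<lambda>t. exp (- x * cosh t) * w t)"
    using w unfolding goodw_def by (intro continuous_intros) (auto intro: continuous_on_subset)
  show ?thesis
    by (rule measurable_bounded_by_integrable_imp_absolutely_integrable[OF
          continuous_imp_measurable_on_sets_lebesgue[OF cont] _ exp_minus_integrable[of B]])
       (use B in auto)
qed

lemma Kw_int:
  assumes w: "goodw w" and x: "0 < x"
  shows "(\<lambda>t. exp (- x * cosh t) * w t) integrable_on {0..}"
  using Kw_absint[OF assms] unfolding absolutely_integrable_on_def by blast

lemma Kw_has_int:
  assumes w: "goodw w" and x: "0 < x"
  shows "((\<lambda>t. exp (- x * cosh t) * w t) has_integral Kw w x) {0..}"
  unfolding Kw_def using Kw_int[OF assms] by (simp add: integrable_integral)

lemma goodw_cosh: "goodw (\<lambda>t. cosh (a * t))"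
  unfolding goodw_def
proof (intro conjI exI allI impI)
  show "continuous_on UNIV (\<lambda>t. cosh (a * t))" by (intro continuous_intros)
  fix t :: real assume t: "0 \<le> t"
  have "\<bar>cosh (a * t)\<bar> = cosh (a*t)" using cosh_pos'[of "a*t"] by simp
  also have "\<dots> \<le> exp \<bar>a * t\<bar>" by (rule cosh_le_exp_abs)
  also have "\<dots> = exp (\<bar>a\<bar> * t)" using t by (simp add: abs_mult)
  finally show "\<bar>cosh (a * t)\<bar> \<le> 1 * exp (\<bar>a\<bar> * t)" by simp
qed

lemma goodw_sinh: "goodw (\<lambda>t. sinh (a * t))"
  unfolding goodw_def
proof (intro conjI exI allI impI)
  show "continuous_on UNIV (\<lambda>t. sinh (a * t))" by (intro continuous_intros)
  fix t :: real assume t: "0 \<le> t"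
  have "\<bar>sinh (a * t)\<bar> \<le> exp \<bar>a * t\<bar>" by (rule abs_sinh_le_exp_abs)
  also have "\<dots> = exp (\<bar>a\<bar> * t)" using t by (simp add: abs_mult)
  finally show "\<bar>sinh (a * t)\<bar> \<le> 1 * exp (\<bar>a\<bar> * t)" by simp
qed

lemma goodw_mult:
  assumes v: "goodw v" and w: "goodw w"
  shows "goodw (\<lambda>t. v t * w t)"
proof -
  obtain C1 M1 where 1: "\<And>t. t \<ge> 0 \<Longrightarrow> \<bar>v t\<bar> \<le> C1 * exp (M1 * t)" using v unfolding goodw_def by blast
  obtain C2 M2 where 2: "\<And>t. t \<ge> 0 \<Longrightarrow> \<bar>w t\<bar> \<le> C2 * exp (M2 * t)" using w unfolding goodw_def by blast
  have C1: "0 \<le> C1" using 1[of 0] by simp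
  have "continuous_on UNIV (\<lambda>t. v t * w t)" using v w unfolding goodw_def by (intro continuous_intros) auto
  moreover have "\<bar>v t * w t\<bar> \<le> (C1 * C2) * exp ((M1 + M2) * t)" if t: "t \<ge> 0" for t
  proof -
    have "\<bar>v t * w t\<bar> = \<bar>v t\<bar> * \<bar>w t\<bar>" by (simp add: abs_mult)
    also have "\<dots> \<le> (C1 * exp (M1 * t)) * (C2 * exp (M2 * t))"
      using 1[OF t] 2[OF t] by (intro mult_mono) auto
    also have "\<dots> = (C1 * C2) * exp ((M1 + M2) * t)" by (simp add: distrib_right exp_add)
    finally show ?thesis .
  qed
  ultimately show ?thesis unfolding goodw_def by blast
qed

lemma goodw_abs:
  assumes w: "goodw w" shows "goodw (\<lambda>t. \<bar>w t\<bar>)"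
  using w unfolding goodw_def by (auto intro: continuous_intros)

lemma goodw_const: "goodw (\<lambda>t. c)"
  unfolding goodw_def by (intro conjI exI[of _ "\<bar>c\<bar>"] exI[of _ 0]) auto

lemma goodw_add:
  assumes v: "goodw v" and w: "goodw w"
  shows "goodw (\<lambda>t. v t + w t)"
proof -
  obtain C1 M1 where 1: "\<And>t. t \<ge> 0 \<Longrightarrow> \<bar>v t\<bar> \<le> C1 * exp (M1 * t)" using v unfolding goodw_def by blast
  obtain C2 M2 where 2: "\<And>t. t \<ge> 0 \<Longrightarrow> \<bar>w t\<bar> \<le> C2 * exp (M2 * t)" using w unfolding goodw_def by blast
  have C1: "0 \<le> C1" using 1[of 0] by simp
  have C2: "0 \<le> C2" using 2[of 0] by simp
  define M where "M = max \<bar>M1\<bar> \<bar>M2\<bar>"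
  have "continuous_on UNIV (\<lambda>t. v t + w t)" using v w unfolding goodw_def by (intro continuous_intros) auto
  moreover have "\<bar>v t + w t\<bar> \<le> (C1 + C2) * exp (M * t)" if t: "t \<ge> 0" for t
  proof -
    have e1: "exp (M1 * t) \<le> exp (M * t)" using t unfolding M_def by (intro exp_mono mult_right_mono) auto
    have e2: "exp (M2 * t) \<le> exp (M * t)" using t unfolding M_def by (intro exp_mono mult_right_mono) auto
    have "\<bar>v t + w t\<bar> \<le> \<bar>v t\<bar> + \<bar>w t\<bar>" by simp
    also have "\<dots> \<le> C1 * exp (M * t) + C2 * exp (M * t)"
      using 1[OF t] 2[OF t] e1 e2 C1 C2 by (smt (verit) mult_left_mono)
    finally show ?thesis by (simp add: distrib_right)
  qed
  ultimately show ?thesis unfolding goodw_def by blast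
qed

lemma Kw_mono:
  assumes w: "goodw w" and wpos: "\<And>t. t \<ge> 0 \<Longrightarrow> 0 \<le> w t" and x: "0 < x" and xy: "x \<le> y"
  shows "Kw w y \<le> Kw w x"
  unfolding Kw_def
proof (rule integral_le[OF Kw_int[OF w] Kw_int[OF w x]])
  show "0 < y" using x xy by simp
  fix t :: real assume "t \<in> {0..}"
  then have "0 \<le> w t" using wpos by simp
  moreover have "exp (- y * cosh t) \<le> exp (- x * cosh t)"
    using xy cosh_pos'[of t] by (simp add: mult_right_mono)
  ultimately show "exp (- y * cosh t) * w t \<le> exp (- x * cosh t) * w t" by (simp add: mult_right_mono)
qed

lemma Kw_pos:
  assumes w: "goodw w" and wge: "\<And>t. t \<ge> 0 \<Longrightarrow> 1 \<le> w t" and x: "0 < x"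
  shows "0 < Kw w x"
proof -
  let ?f = "\<lambda>t. exp (- x * cosh t) * w t"
  have i: "?f integrable_on {0..}" by (rule Kw_int[OF w x])
  have i1: "?f integrable_on {0..1}" by (rule integrable_on_subinterval[OF i]) auto
  have "integral {0..1} (\<lambda>t::real. exp (- x * exp 1)) \<le> integral {0..1} ?f"
  proof (rule integral_le)
    fix t :: real assume t: "t \<in> {0..1}"
    have "cosh t \<le> exp \<bar>t\<bar>" by (rule cosh_le_exp_abs)
    also have "\<dots> \<le> exp 1" using t by simp
    finally have "exp (- x * exp 1) \<le> exp (- x * cosh t)" using x by simp
    also have "\<dots> \<le> exp (- x * cosh t) * w t" using wge[of t] t by simp
    finally show "exp (- x * exp 1) \<le> ?f t" .
  qed (use i1 in auto)
  also have "\<dots> \<le> integral {0..} ?f"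
  proof (rule integral_subset_le[OF _ i1 i])
    show "\<forall>t\<in>{0..}. 0 \<le> ?f t"
    proof
      fix t :: real assume t: "t \<in> {0..}"
      then have "0 \<le> w t" using wge[of t] by simp
      then show "0 \<le> ?f t" by simp
    qed
  qed auto
  finally have "exp (- x * exp 1) \<le> integral {0..} ?f" by simp
  then show ?thesis unfolding Kw_def by (meson exp_gt_zero less_le_trans)
qed


lemma taylor_exp_bound:
  fixes x y u :: real
  assumes x: "0 < x" and xy: "\<bar>y - x\<bar> < x/2" and u: "0 \<le> u"
  shows "\<bar>exp (-y*u) - exp (-x*u) + (y-x)*u*exp (-x*u)\<bar> \<le> (y-x)\<^sup>2/2 * (u\<^sup>2 * exp (-(x/2)*u))"
proof -
  define z where "z = (x - y) * u"
  obtain s where s: "\<bar>s\<bar> \<le> \<bar>z\<bar>" and ez: "exp z = (\<Sum>m<2. z ^ m / fact m) + exp s / fact 2 * z ^ 2"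
    using Maclaurin_exp_le[of z 2] by blast
  have ez': "exp z = 1 + z + exp s / 2 * z\<^sup>2" using ez by (simp add: numeral_2_eq_2)
  have ey: "exp (-y*u) = exp (-x*u) * exp z" unfolding z_def by (simp flip: exp_add add: algebra_simps)
  have "exp (-y*u) - exp (-x*u) + (y-x)*u*exp (-x*u) = exp (-x*u) * (exp z - 1 - z)"
    unfolding ey z_def by (simp add: algebra_simps)
  also have "\<dots> = exp (-x*u + s) * z\<^sup>2 / 2"
  proof -
    have "exp (-x*u + s) = exp (-x*u) * exp s" by (rule exp_add)
    then show ?thesis unfolding ez' by (simp add: algebra_simps)
  qed
  finally have eq: "exp (-y*u) - exp (-x*u) + (y-x)*u*exp (-x*u) = exp (-x*u + s) * z\<^sup>2 / 2" .
  have xy': "\<bar>x - y\<bar> \<le> x/2" using xy by (simp add: abs_minus_commute)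
  have "\<bar>z\<bar> = \<bar>x - y\<bar> * u" unfolding z_def using u by (simp add: abs_mult)
  also have "\<dots> \<le> x/2 * u" by (rule mult_right_mono[OF xy' u])
  finally have "\<bar>z\<bar> \<le> x/2 * u" .
  then have "-x*u + s \<le> -(x/2)*u" using s by argo
  then have "exp (-x*u + s) \<le> exp (-(x/2)*u)" by simp
  moreover have "z\<^sup>2 = (y-x)\<^sup>2 * u\<^sup>2" unfolding z_def by (simp add: power2_eq_square algebra_simps)
  ultimately have E: "exp (-x*u + s) \<le> exp (-(x/2)*u)" and z2: "z\<^sup>2 = (y-x)\<^sup>2 * u\<^sup>2" by auto
  have "\<bar>exp (-x*u + s) * z\<^sup>2 / 2\<bar> = exp (-x*u + s) * (z\<^sup>2 / 2)" by simp
  also have "\<dots> \<le> exp (-(x/2)*u) * (z\<^sup>2 / 2)" by (rule mult_right_mono[OF E]) simp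
  also have "\<dots> = (y-x)\<^sup>2/2 * (u\<^sup>2 * exp (-(x/2)*u))" unfolding z2 by (simp add: algebra_simps)
  finally show ?thesis unfolding eq .
qed

lemma Kw_deriv:
  assumes w: "goodw w" and x: "0 < x"
  shows "(Kw w has_real_derivative - Kw (\<lambda>t. cosh t * w t) x) (at x)"
proof -
  have gc: "goodw (\<lambda>t. cosh t)" using goodw_cosh[of 1] by simp
  have gcw: "goodw (\<lambda>t. cosh t * w t)" by (rule goodw_mult[OF gc w])
  have gccw: "goodw (\<lambda>t. cosh t * (cosh t * \<bar>w t\<bar>))" by (intro goodw_mult gc goodw_abs w)
  define G where "G = Kw (\<lambda>t. cosh t * (cosh t * \<bar>w t\<bar>)) (x/2)"
  define D where "D = - Kw (\<lambda>t. cosh t * w t) x"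
  have key: "\<bar>Kw w y - Kw w x - (y - x) * D\<bar> \<le> (y-x)\<^sup>2/2 * G" if hy: "\<bar>y - x\<bar> < x/2" for y
  proof -
    have y: "0 < y" using hy x by argo
    have h1: "((\<lambda>t. exp (- y * cosh t) * w t) has_integral Kw w y) {0..}" by (rule Kw_has_int[OF w y])
    have h2: "((\<lambda>t. exp (- x * cosh t) * w t) has_integral Kw w x) {0..}" by (rule Kw_has_int[OF w x])
    have h3: "((\<lambda>t. exp (- x * cosh t) * (cosh t * w t)) has_integral Kw (\<lambda>t. cosh t * w t) x) {0..}"
      by (rule Kw_has_int[OF gcw x])
    have h4: "((\<lambda>t. exp (- (x/2) * cosh t) * (cosh t * (cosh t * \<bar>w t\<bar>))) has_integral G) {0..}"
      unfolding G_def by (rule Kw_has_int[OF gccw]) (use x in simp)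
    have hc: "((\<lambda>t. exp (- y * cosh t) * w t - exp (- x * cosh t) * w t + (y - x) * (exp (- x * cosh t) * (cosh t * w t)))
        has_integral (Kw w y - Kw w x - (y - x) * D)) {0..}"
      unfolding D_def using has_integral_add[OF has_integral_diff[OF h1 h2] has_integral_mult_right[OF h3, of "y - x"]]
      by simp
    have hG: "((\<lambda>t. (y-x)\<^sup>2/2 * (exp (- (x/2) * cosh t) * (cosh t * (cosh t * \<bar>w t\<bar>)))) has_integral ((y-x)\<^sup>2/2 * G)) {0..}"
      by (rule has_integral_mult_right[OF h4])
    have bnd: "norm (integral {0..} (\<lambda>t. exp (- y * cosh t) * w t - exp (- x * cosh t) * w t + (y - x) * (exp (- x * cosh t) * (cosh t * w t))))
        \<le> integral {0..} (\<lambda>t. (y-x)\<^sup>2/2 * (exp (- (x/2) * cosh t) * (cosh t * (cosh t * \<bar>w t\<bar>))))"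
    proof (rule integral_norm_bound_integral)
      show "(\<lambda>t. exp (- y * cosh t) * w t - exp (- x * cosh t) * w t + (y - x) * (exp (- x * cosh t) * (cosh t * w t))) integrable_on {0..}"
        using hc by blast
      show "(\<lambda>t. (y-x)\<^sup>2/2 * (exp (- (x/2) * cosh t) * (cosh t * (cosh t * \<bar>w t\<bar>)))) integrable_on {0..}"
        using hG by blast
      fix t :: real assume "t \<in> {0..}"
      have c0: "0 \<le> cosh t" using cosh_pos'[of t] by simp
      have "exp (- y * cosh t) * w t - exp (- x * cosh t) * w t + (y - x) * (exp (- x * cosh t) * (cosh t * w t))
          = (exp (-y*cosh t) - exp (-x*cosh t) + (y-x)*cosh t*exp (-x*cosh t)) * w t"
        by (simp add: algebra_simps)
      then have "norm (exp (- y * cosh t) * w t - exp (- x * cosh t) * w t + (y - x) * (exp (- x * cosh t) * (cosh t * w t)))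
          = \<bar>exp (-y*cosh t) - exp (-x*cosh t) + (y-x)*cosh t*exp (-x*cosh t)\<bar> * \<bar>w t\<bar>"
        by (simp add: abs_mult)
      also have "\<dots> \<le> ((y-x)\<^sup>2/2 * ((cosh t)\<^sup>2 * exp (-(x/2)*cosh t))) * \<bar>w t\<bar>"
        by (rule mult_right_mono[OF taylor_exp_bound[OF x hy c0]]) simp
      also have "\<dots> = (y-x)\<^sup>2/2 * (exp (- (x/2) * cosh t) * (cosh t * (cosh t * \<bar>w t\<bar>)))"
        by (simp add: power2_eq_square mult_ac)
      finally show "norm (exp (- y * cosh t) * w t - exp (- x * cosh t) * w t + (y - x) * (exp (- x * cosh t) * (cosh t * w t)))
          \<le> (y-x)\<^sup>2/2 * (exp (- (x/2) * cosh t) * (cosh t * (cosh t * \<bar>w t\<bar>)))" .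
    qed
    have "norm (Kw w y - Kw w x - (y - x) * D) \<le> (y-x)\<^sup>2/2 * G"
      using bnd unfolding integral_unique[OF hc] integral_unique[OF hG] .
    then show ?thesis by simp
  qed
  have "((\<lambda>y. (Kw w y - Kw w x) / (y - x) - D) \<longlongrightarrow> 0) (at x)"
  proof (rule Lim_null_comparison)
    have "\<forall>y. y \<noteq> x \<and> dist y x < x / 2 \<longrightarrow> norm ((Kw w y - Kw w x) / (y - x) - D) \<le> \<bar>y - x\<bar> / 2 * G"
    proof (intro allI impI)
      fix y assume "y \<noteq> x \<and> dist y x < x / 2"
      then have yx: "y \<noteq> x" and d: "\<bar>y - x\<bar> < x/2" by (auto simp: dist_real_def)
      have "(Kw w y - Kw w x) / (y - x) - D = (Kw w y - Kw w x - (y - x) * D) / (y - x)"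
        using yx by (simp add: field_simps)
      then have "norm ((Kw w y - Kw w x) / (y - x) - D) = \<bar>Kw w y - Kw w x - (y - x) * D\<bar> / \<bar>y - x\<bar>"
        by (simp add: abs_divide)
      also have "\<dots> \<le> ((y-x)\<^sup>2/2 * G) / \<bar>y - x\<bar>"
        by (rule divide_right_mono[OF key[OF d] abs_ge_zero])
      also have "\<dots> = \<bar>y - x\<bar> / 2 * G"
        using yx by (simp add: power2_eq_square field_simps abs_mult_self_eq)
      finally show "norm ((Kw w y - Kw w x) / (y - x) - D) \<le> \<bar>y - x\<bar> / 2 * G" .
    qed
    then show "\<forall>\<^sub>F y in at x. norm ((Kw w y - Kw w x) / (y - x) - D) \<le> \<bar>y - x\<bar> / 2 * G"
      unfolding eventually_at using x by (intro exI[of _ "x/2"]) auto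
    show "((\<lambda>y. \<bar>y - x\<bar> / 2 * G) \<longlongrightarrow> 0) (at x)"
      by (rule tendsto_eq_intros refl | simp)+
  qed
  then have "((\<lambda>y. (Kw w y - Kw w x) / (y - x)) \<longlongrightarrow> D) (at x)"
    by (simp add: Lim_null[symmetric])
  then show ?thesis unfolding D_def has_field_derivative_iff by simp
qed


lemma goodw_sinh1: "goodw (\<lambda>t. sinh t)" using goodw_sinh[of 1] by simp
lemma goodw_cosh1: "goodw (\<lambda>t. cosh t)" using goodw_cosh[of 1] by simp

lemma exp_minus_nat_lim: "(\<lambda>j::nat. exp (- real j)) \<longlonglongrightarrow> 0"
proof -
  have "(\<lambda>j::nat. exp (- real j)) = (\<lambda>j. exp (-1) ^ j)"
    by (rule ext) (metis exp_of_nat_mult mult.commute mult_minus1_right mult.right_neutral mult_minus_right)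
  moreover have "(\<lambda>j. exp (-1::real) ^ j) \<longlonglongrightarrow> 0" by (rule LIMSEQ_power_zero) simp
  ultimately show ?thesis by simp
qed

lemma K_rec:
  fixes k :: nat and x :: real
  assumes k: "1 \<le> k" and x: "0 < x"
  shows "Kw (\<lambda>t. cosh t * cosh (real k * t)) x \<le> (real k / x + 1) * Kw (\<lambda>t. cosh (real k * t)) x"
proof -
  define h where "h t = exp (- x * cosh t) * (real k * cosh (real k * t) - x * (sinh t * sinh (real k * t)))" for t
  define F where "F t = exp (- x * cosh t) * sinh (real k * t)" for t
  have Fd: "(F has_real_derivative h t) (at t)" for t
    unfolding F_def h_def by (auto intro!: derivative_eq_intros simp: algebra_simps)
  define H where "H t = exp (- x * cosh t) * (real k * cosh (real k * t) + x * \<bar>sinh t * sinh (real k * t)\<bar>)" for t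
  have gH: "goodw (\<lambda>t. real k * cosh (real k * t) + x * \<bar>sinh t * sinh (real k * t)\<bar>)"
    by (intro goodw_add goodw_mult goodw_const goodw_cosh goodw_abs goodw_sinh goodw_sinh1)
  have Hint: "H integrable_on {0..}" unfolding H_def by (rule Kw_int[OF gH x])
  have hH: "norm (h t) \<le> H t" for t
  proof -
    have c: "0 \<le> real k * cosh (real k * t)" using cosh_pos'[of "real k * t"] by simp
    have "\<bar>real k * cosh (real k * t) - x * (sinh t * sinh (real k * t))\<bar> \<le>
          real k * cosh (real k * t) + x * \<bar>sinh t * sinh (real k * t)\<bar>"
    proof -
      have "\<bar>real k * cosh (real k * t) - x * (sinh t * sinh (real k * t))\<bar> \<le>
          \<bar>real k * cosh (real k * t)\<bar> + \<bar>x * (sinh t * sinh (real k * t))\<bar>"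
        by (rule abs_triangle_ineq4)
      moreover have "\<bar>x * (sinh t * sinh (real k * t))\<bar> = x * \<bar>sinh t * sinh (real k * t)\<bar>"
        using x by (simp add: abs_mult)
      ultimately show ?thesis using c by simp
    qed
    then show ?thesis unfolding h_def H_def by (simp add: abs_mult mult_left_mono)
  qed
  define f where "f j t = (if t \<in> {0..real j} then h t else 0)" for j :: nat and t
  have fint: "(f j has_integral F (real j)) {0..}" for j
  proof -
    have "(h has_integral F (real j) - F 0) {0..real j}"
      by (rule fundamental_theorem_of_calculus)
         (auto simp: has_real_derivative_iff_has_vector_derivative[symmetric] intro: has_field_derivative_at_within[OF Fd])
    then have "(h has_integral F (real j)) {0..real j}" by (simp add: F_def)
    then show ?thesis unfolding f_def by (subst has_integral_restrict) auto
  qed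
  have conv: "(\<lambda>j. f j t) \<longlonglongrightarrow> h t" if "t \<in> {0..}" for t
  proof (rule tendsto_eventually)
    show "\<forall>\<^sub>F j in sequentially. f j t = h t"
      unfolding eventually_sequentially
    proof (intro exI allI impI)
      fix j assume "nat \<lceil>t\<rceil> \<le> j"
      then have "t \<le> real j" by linarith
      then show "f j t = h t" using that unfolding f_def by simp
    qed
  qed
  have fle: "norm (f j t) \<le> H t" if "t \<in> {0..}" for j t
    using hH[of t] unfolding f_def by (cases "t \<in> {0..real j}") (auto intro: order_trans[OF norm_ge_zero])
  have DC: "h integrable_on {0..}" "(\<lambda>j. integral {0..} (f j)) \<longlonglongrightarrow> integral {0..} h"
    using dominated_convergence[of f "{0..}" H h, OF _ Hint fle conv] fint by blast+
  have Flim: "(\<lambda>j. F (real j)) \<longlonglongrightarrow> 0"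
  proof -
    obtain B where B: "\<And>t. t \<ge> 0 \<Longrightarrow> \<bar>exp (- x * cosh t) * sinh (real k * t)\<bar> \<le> B * exp (-t)"
      using goodw_bound[OF goodw_sinh x] by blast
    show ?thesis
    proof (rule Lim_null_comparison)
      show "\<forall>\<^sub>F j in sequentially. norm (F (real j)) \<le> B * exp (- real j)"
        using B unfolding F_def by simp
      show "(\<lambda>j. B * exp (- real j)) \<longlonglongrightarrow> 0"
        using tendsto_mult[OF tendsto_const exp_minus_nat_lim, of B] by simp
    qed
  qed
  have "(\<lambda>j. integral {0..} (f j)) = (\<lambda>j. F (real j))" using fint integral_unique by blast
  then have h0: "integral {0..} h = 0" using DC(2) Flim LIMSEQ_unique by metis
  define K where "K = Kw (\<lambda>t. cosh (real k * t)) x"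
  define SS where "SS = Kw (\<lambda>t. sinh t * sinh (real k * t)) x"
  define K' where "K' = Kw (\<lambda>t. cosh ((real k - 1) * t)) x"
  have gss: "goodw (\<lambda>t. sinh t * sinh (real k * t))" by (intro goodw_mult goodw_sinh goodw_sinh1)
  have iK: "((\<lambda>t. exp (- x * cosh t) * cosh (real k * t)) has_integral K) {0..}"
    unfolding K_def by (rule Kw_has_int[OF goodw_cosh x])
  have iS: "((\<lambda>t. exp (- x * cosh t) * (sinh t * sinh (real k * t))) has_integral SS) {0..}"
    unfolding SS_def by (rule Kw_has_int[OF gss x])
  have iK': "((\<lambda>t. exp (- x * cosh t) * cosh ((real k - 1) * t)) has_integral K') {0..}"
    unfolding K'_def by (rule Kw_has_int[OF goodw_cosh x])
  have "((\<lambda>t. real k * (exp (- x * cosh t) * cosh (real k * t)) - x * (exp (- x * cosh t) * (sinh t * sinh (real k * t))))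
      has_integral (real k * K - x * SS)) {0..}"
    by (intro has_integral_diff has_integral_mult_right iK iS)
  moreover have "(\<lambda>t. real k * (exp (- x * cosh t) * cosh (real k * t)) - x * (exp (- x * cosh t) * (sinh t * sinh (real k * t)))) = h"
    unfolding h_def by (rule ext) (simp add: algebra_simps)
  ultimately have "real k * K - x * SS = 0" using h0 integral_unique by metis
  then have SSv: "SS = real k / x * K" using x by (simp add: field_simps)
  have "((\<lambda>t. exp (- x * cosh t) * (sinh t * sinh (real k * t)) + exp (- x * cosh t) * cosh ((real k - 1) * t))
      has_integral (SS + K')) {0..}"
    by (intro has_integral_add iS iK')
  moreover have "(\<lambda>t. exp (- x * cosh t) * (sinh t * sinh (real k * t)) + exp (- x * cosh t) * cosh ((real k - 1) * t))
      = (\<lambda>t. exp (- x * cosh t) * (cosh t * cosh (real k * t)))"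
  proof (rule ext)
    fix t :: real
    have "cosh ((real k - 1) * t) = cosh (real k * t - t)" by (simp add: algebra_simps)
    also have "\<dots> = cosh (real k * t) * cosh t - sinh (real k * t) * sinh t" by (rule cosh_diff)
    finally have E: "cosh ((real k - 1) * t) = cosh (real k * t) * cosh t - sinh (real k * t) * sinh t" .
    show "exp (- x * cosh t) * (sinh t * sinh (real k * t)) + exp (- x * cosh t) * cosh ((real k - 1) * t)
      = exp (- x * cosh t) * (cosh t * cosh (real k * t))" unfolding E by (simp add: algebra_simps)
  qed
  ultimately have Lv: "Kw (\<lambda>t. cosh t * cosh (real k * t)) x = SS + K'"
    unfolding Kw_def using integral_unique by metis
  have "K' \<le> K" unfolding K'_def K_def Kw_def
  proof (rule integral_le[OF Kw_int[OF goodw_cosh x] Kw_int[OF goodw_cosh x]])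
    fix t :: real assume t: "t \<in> {0..}"
    have "cosh ((real k - 1) * t) \<le> cosh (real k * t)"
      using t k by (subst cosh_real_nonneg_le_iff) (auto intro: mult_right_mono)
    then show "exp (- x * cosh t) * cosh ((real k - 1) * t) \<le> exp (- x * cosh t) * cosh (real k * t)"
      by simp
  qed
  then show ?thesis unfolding Lv SSv K_def[symmetric] by (simp add: algebra_simps)
qed


section \<open>Bridging to the Bessel functions\<close>

lemma bessel_K_fun: "bessel_K (int k) = Kw (\<lambda>t. cosh (real k * t))"
  unfolding bessel_K_def[abs_def] Kw_def[abs_def] by simp

lemma bessel_K_eq: "bessel_K (int k) x = Kw (\<lambda>t. cosh (real k * t)) x"
  by (simp add: bessel_K_fun)

lemma cosh_prod_ge1: "1 \<le> cosh t * cosh (a * (t::real))"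
  using cosh_real_ge_1[of t] cosh_real_ge_1[of "a*t"] by (metis mult_mono' mult_1 zero_le_one)

lemma goodw_Lw: "goodw (\<lambda>t. cosh t * cosh (real k * t))"
  by (intro goodw_mult goodw_cosh1 goodw_cosh)

lemma bessel_K'_eq: "0 < x \<Longrightarrow> bessel_K' (int k) x = - Kw (\<lambda>t. cosh t * cosh (real k * t)) x"
  unfolding bessel_K'_def bessel_K_fun
  by (rule DERIV_imp_deriv[OF Kw_deriv[OF goodw_cosh]])

lemma K_pos: "0 < x \<Longrightarrow> 0 < bessel_K (int k) x"
  unfolding bessel_K_eq by (rule Kw_pos[OF goodw_cosh]) (auto simp: cosh_real_ge_1)

lemma K_mono: "0 < x \<Longrightarrow> x \<le> y \<Longrightarrow> bessel_K (int k) y \<le> bessel_K (int k) x"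
  unfolding bessel_K_eq by (rule Kw_mono[OF goodw_cosh]) (auto simp: cosh_pos' less_imp_le)

lemma L_pos: "0 < x \<Longrightarrow> 0 < - bessel_K' (int k) x"
proof -
  assume x: "0 < x"
  have "0 < Kw (\<lambda>t. cosh t * cosh (real k * t)) x"
    by (rule Kw_pos[OF goodw_Lw _ x]) (rule cosh_prod_ge1)
  then show ?thesis using x by (simp add: bessel_K'_eq)
qed

lemma L_mono: "0 < x \<Longrightarrow> x \<le> y \<Longrightarrow> - bessel_K' (int k) y \<le> - bessel_K' (int k) x"
proof -
  assume x: "0 < x" and xy: "x \<le> y"
  have "Kw (\<lambda>t. cosh t * cosh (real k * t)) y \<le> Kw (\<lambda>t. cosh t * cosh (real k * t)) x"
    by (rule Kw_mono[OF goodw_Lw _ x xy]) (rule order_trans[OF zero_le_one cosh_prod_ge1])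
  then show ?thesis using x xy by (simp add: bessel_K'_eq)
qed

lemma L_rec1: "1 \<le> k \<Longrightarrow> - bessel_K' (int k) 1 \<le> (real k + 1) * bessel_K (int k) 1"
  using K_rec[of k 1] by (simp add: bessel_K'_eq bessel_K_eq)

lemma J_pos: "0 < x \<Longrightarrow> 0 < bessel_I' (int k) x"
  by (simp add: bessel_I'_eq Idf_pos)

lemma J_lower: "0 < x \<Longrightarrow> real k / x * bessel_I (int k) x \<le> bessel_I' (int k) x"
  using Idf_lower[of x k] by (simp add: bessel_I'_eq)

lemma J_upper: "0 < x \<Longrightarrow> bessel_I' (int k) x \<le> (real k / x + x / 2) * bessel_I (int k) x"
  by (simp add: bessel_I'_eq Idf_upper)

lemma bessel_I_abs: "bessel_I n = bessel_I (int (nat \<bar>n\<bar>))"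
  unfolding bessel_I_def[abs_def] by simp

lemma bessel_K_abs: "bessel_K n = bessel_K (int (nat \<bar>n\<bar>))"
proof -
  have c: "cosh (real_of_int n * t) = cosh (\<bar>real_of_int n\<bar> * t)" for t
  proof (cases "n \<ge> 0")
    case True then show ?thesis by simp
  next
    case False
    then have "\<bar>real_of_int n\<bar> = - real_of_int n" by simp
    then show ?thesis by (metis cosh_minus mult_minus_left)
  qed
  show ?thesis unfolding bessel_K_def[abs_def] by (simp add: c)
qed

lemma bessel_I'_abs: "bessel_I' n = bessel_I' (int (nat \<bar>n\<bar>))"
  unfolding bessel_I'_def[abs_def] by (subst bessel_I_abs) simp

lemma bessel_K'_abs: "bessel_K' n = bessel_K' (int (nat \<bar>n\<bar>))"
  unfolding bessel_K'_def[abs_def] by (subst bessel_K_abs) simp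

definition mlt :: "real \<Rightarrow> real \<Rightarrow> int \<Rightarrow> real" where
  "mlt \<sigma>1 r1 n = (rho \<sigma>1 r1 n * bessel_K n 1 - bessel_I n 1) / (rho \<sigma>1 r1 n * bessel_K' n 1 - bessel_I' n 1)
     - bessel_I n 1 / bessel_I' n 1"

lemma mlt_abs: "mlt \<sigma>1 r1 n = mlt \<sigma>1 r1 (int (nat \<bar>n\<bar>))"
  unfolding mlt_def rho_def
  unfolding bessel_I_abs[of n] bessel_K_abs[of n] bessel_I'_abs[of n] bessel_K'_abs[of n] by simp

lemma NtD_diff: "(\<lambda>g. NtD_core \<sigma>1 r1 g - NtD_hom g) = (\<lambda>g n. complex_of_real (mlt \<sigma>1 r1 n) * g n)"
  unfolding NtD_core_def NtD_hom_def mlt_def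
  by (intro ext) (simp add: of_real_diff left_diff_distrib)

lemma unif_nat_int:
  assumes "\<And>k::nat. sqrt (1 + (real k)\<^sup>2) * \<bar>mlt \<sigma>1 r1 (int k)\<bar> \<le> \<epsilon>"
  shows "sqrt (1 + (real_of_int n)\<^sup>2) * \<bar>mlt \<sigma>1 r1 n\<bar> \<le> \<epsilon>"
proof -
  have "(real_of_int n)\<^sup>2 = (real (nat \<bar>n\<bar>))\<^sup>2" by simp
  then show ?thesis using assms[of "nat \<bar>n\<bar>"] mlt_abs[of \<sigma>1 r1 n] by simp
qed

lemma tendsto_from_unif:
  assumes "\<And>\<epsilon>. \<epsilon> > 0 \<Longrightarrow> eventually (\<lambda>p. \<forall>k::nat. sqrt (1 + (real k)\<^sup>2) * \<bar>mlt (\<sigma> p) (r p) (int k)\<bar> \<le> \<epsilon>) F"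
  shows "((\<lambda>p. opnorm_Hm_H (\<lambda>g. NtD_core (\<sigma> p) (r p) g - NtD_hom g)) \<longlongrightarrow> 0) F"
proof (rule tendstoI)
  fix e :: real assume e: "e > 0"
  show "\<forall>\<^sub>F p in F. dist (opnorm_Hm_H (\<lambda>g. NtD_core (\<sigma> p) (r p) g - NtD_hom g)) 0 < e"
  proof (rule eventually_mono)
    show "\<forall>\<^sub>F p in F. \<forall>k::nat. sqrt (1 + (real k)\<^sup>2) * \<bar>mlt (\<sigma> p) (r p) (int k)\<bar> \<le> e / 2"
      using assms[of "e/2"] e by simp
    fix p assume "\<forall>k::nat. sqrt (1 + (real k)\<^sup>2) * \<bar>mlt (\<sigma> p) (r p) (int k)\<bar> \<le> e / 2"
    then have "\<And>n. sqrt (1 + (real_of_int n)\<^sup>2) * \<bar>mlt (\<sigma> p) (r p) n\<bar> \<le> e/2"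
      using unif_nat_int by blast
    from opnorm_bound[OF this] show "dist (opnorm_Hm_H (\<lambda>g. NtD_core (\<sigma> p) (r p) g - NtD_hom g)) 0 < e"
      unfolding NtD_diff using e by (simp add: dist_real_def)
  qed
qed


section \<open>Real-arithmetic estimates\<close>

lemma mult_bound_real:
  fixes \<rho> I J K Kd :: real
  assumes J: "0 < J" and I: "0 \<le> I" and K: "0 \<le> K" and Kd: "Kd \<le> 0" and small: "\<bar>\<rho>\<bar> * (- Kd) \<le> J/2"
  shows "\<bar>(\<rho>*K - I)/(\<rho>*Kd - J) - I/J\<bar> \<le> 2*\<bar>\<rho>\<bar>*(K*J + (-Kd)*I)/J\<^sup>2"
proof -
  define L where "L = - Kd"
  have L: "0 \<le> L" using Kd by (simp add: L_def)
  define d where "d = \<rho>*L + J"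
  have "- (\<bar>\<rho>\<bar> * L) \<le> \<rho> * L"
    using L by (metis abs_ge_minus_self abs_mult abs_of_nonneg minus_le_iff)
  then have d: "J/2 \<le> d" using small unfolding d_def L_def by argo
  have dpos: "0 < d" using d J by argo
  have den: "\<rho>*Kd - J = - d" unfolding d_def L_def by simp
  have "(\<rho>*K - I)/(-d) - I/J = ((I - \<rho>*K)*J - I*d)/(d*J)" using dpos J by (simp add: field_simps)
  also have "(I - \<rho>*K)*J - I*d = - (\<rho>*(K*J + L*I))" unfolding d_def by (simp add: algebra_simps)
  finally have eq: "(\<rho>*K - I)/(\<rho>*Kd - J) - I/J = - (\<rho>*(K*J + L*I)) / (d*J)" unfolding den .
  have num0: "0 \<le> \<bar>\<rho>\<bar>*(K*J + L*I)" using K J I L by simp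
  have "\<bar>(\<rho>*K - I)/(\<rho>*Kd - J) - I/J\<bar> = \<bar>\<rho>\<bar>*(K*J + L*I) / (d*J)"
    unfolding eq using dpos J K I L by (simp add: abs_divide abs_mult)
  also have "\<dots> \<le> \<bar>\<rho>\<bar>*(K*J + L*I) / ((J/2)*J)"
    by (rule divide_left_mono[OF _ num0]) (use d J in \<open>auto intro: mult_right_mono\<close>)
  also have "\<dots> = 2*\<bar>\<rho>\<bar>*(K*J + L*I)/J\<^sup>2" by (simp add: power2_eq_square field_simps)
  finally show ?thesis unfolding L_def .
qed

lemma tail_real:
  fixes k I J K Kd \<rho> \<tau> :: real
  assumes k: "1 \<le> k" and I: "0 < I" and J: "k*I \<le> J" and K: "0 < K" and Kd: "Kd \<le> 0"
    and L1: "- Kd \<le> (k+1)*K"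
    and \<rho>: "\<bar>\<rho>\<bar> \<le> \<tau>*I/K" and \<tau>0: "0 \<le> \<tau>" and \<tau>k: "\<tau>*(k+1) \<le> k/2"
  shows "sqrt (1 + k\<^sup>2) * \<bar>(\<rho>*K - I)/(\<rho>*Kd - J) - I/J\<bar> \<le> 12*\<tau>"
proof -
  define L where "L = - Kd"
  have L: "0 \<le> L" "L \<le> (k+1)*K" using Kd L1 by (auto simp: L_def)
  have kI: "0 < k*I" using k I by simp
  have Jp: "0 < J" using kI J by argo
  have "\<bar>\<rho>\<bar> * L \<le> (\<tau>*I/K) * ((k+1)*K)"
    by (rule mult_mono[OF \<rho> L(2)]) (use \<tau>0 I K L in auto)
  also have "\<dots> = \<tau>*(k+1)*I" using K by (simp add: field_simps)
  also have "\<dots> \<le> k/2*I" by (rule mult_right_mono[OF \<tau>k]) (use I in simp)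
  also have "\<dots> \<le> J/2" using J by simp
  finally have small: "\<bar>\<rho>\<bar> * (-Kd) \<le> J/2" unfolding L_def .
  have mb: "\<bar>(\<rho>*K - I)/(\<rho>*Kd - J) - I/J\<bar> \<le> 2*\<bar>\<rho>\<bar>*(K*J + L*I)/J\<^sup>2"
    using mult_bound_real[OF Jp _ _ Kd small] I K unfolding L_def by simp
  have "\<bar>\<rho>\<bar>*(K*J + L*I) \<le> (\<tau>*I/K)*(K*J + ((k+1)*K)*I)"
    by (rule mult_mono[OF \<rho>]) (use L I K Jp \<tau>0 in \<open>auto intro: mult_right_mono\<close>)
  also have "\<dots> = \<tau>*(I*J + (k+1)*I*I)" using K by (simp add: field_simps)
  also have "\<dots> \<le> \<tau>*(3*J*J/k)"
  proof (rule mult_left_mono[OF _ \<tau>0])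
    have f1: "k*I*J \<le> J*J" by (rule mult_right_mono[OF J]) (use Jp in simp)
    have f2: "(k*I)*(k*I) \<le> J*J" by (rule mult_mono[OF J J]) (use kI Jp in auto)
    have f3: "k*(k+1)*I*I \<le> 2*((k*I)*(k*I))"
    proof -
      have "k*(k+1) \<le> 2*(k*k)" using k by (simp add: algebra_simps)
      then have "k*(k+1)*(I*I) \<le> 2*(k*k)*(I*I)" by (rule mult_right_mono) simp
      then show ?thesis by (simp add: mult_ac)
    qed
    have "k*(I*J + (k+1)*I*I) \<le> 3*J*J" using f1 f2 f3 by (simp add: algebra_simps)
    then show "I*J + (k+1)*I*I \<le> 3*J*J/k" using k by (simp add: field_simps)
  qed
  finally have A: "\<bar>\<rho>\<bar>*(K*J + L*I) \<le> \<tau>*(3*J*J/k)" .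
  have "2*\<bar>\<rho>\<bar>*(K*J + L*I)/J\<^sup>2 \<le> 2*(\<tau>*(3*J*J/k))/J\<^sup>2"
  proof (rule divide_right_mono)
    show "2*\<bar>\<rho>\<bar>*(K*J + L*I) \<le> 2*(\<tau>*(3*J*J/k))" using A by (simp add: mult.assoc)
  qed simp
  also have "\<dots> = 6*\<tau>/k" using Jp k by (simp add: power2_eq_square field_simps)
  finally have B: "\<bar>(\<rho>*K - I)/(\<rho>*Kd - J) - I/J\<bar> \<le> 6*\<tau>/k" using mb by linarith
  have "sqrt (1 + k\<^sup>2) \<le> sqrt ((k+1)\<^sup>2)" using k by (intro real_sqrt_le_mono) (simp add: power2_eq_square algebra_simps)
  also have "\<dots> = k + 1" using k by simp
  also have "\<dots> \<le> 2*k" using k by simp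
  finally have S: "sqrt (1 + k\<^sup>2) \<le> 2*k" .
  have "sqrt (1 + k\<^sup>2) * \<bar>(\<rho>*K - I)/(\<rho>*Kd - J) - I/J\<bar> \<le> (2*k) * (6*\<tau>/k)"
    by (rule mult_mono[OF S B]) (use k in auto)
  also have "\<dots> = 12*\<tau>" using k by (simp add: field_simps)
  finally show ?thesis .
qed

lemma rho_bound_real:
  fixes \<sigma> r a k Ia Ir P Jr Kr Kd :: real
  assumes \<sigma>: "0 < \<sigma>" and r: "0 < r" and r1: "r \<le> 1" and a: "a = r / sqrt \<sigma>" and k: "1 \<le> k"
    and Ia: "0 < Ia" and Ir: "0 < Ir" and P: "k/a*Ia \<le> P" and Jr0: "0 \<le> Jr" and Jr: "Jr \<le> (k/r + r/2)*Ir"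
    and Kr: "0 < Kr" and Kd: "Kd \<le> 0"
  shows "\<bar>(\<sigma>*P*Ir - Ia*Jr)/(\<sigma>*P*Kr - Ia*Kd)\<bar> \<le> (1 + 3/(2*\<sigma>* sqrt \<sigma>))*Ir/Kr"
proof -
  have sq: "0 < sqrt \<sigma>" using \<sigma> by simp
  have ap: "0 < a" using a r sq by simp
  have "0 < k/a*Ia" using ap k Ia by simp
  then have Pp: "0 < P" using P by linarith
  have IaP: "Ia \<le> a*P/k" using P ap k by (simp add: field_simps)
  have s2: "k/r + r/2 \<le> 3/2*k/r"
  proof -
    have "r*r \<le> 1" using r r1 by (intro mult_le_one) auto
    then have "r*r \<le> k" using k by linarith
    then have "r/2 \<le> k/(2*r)" using r by (simp add: field_simps)
    then have "k/r + r/2 \<le> k/r + k/(2*r)" by simp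
    also have "\<dots> = 3/2*k/r" by (simp add: field_simps)
    finally show ?thesis .
  qed
  have "Ia*Jr \<le> (a*P/k)*((3/2*k/r)*Ir)"
    by (rule mult_mono[OF IaP order_trans[OF Jr mult_right_mono[OF s2]]]) (use Ir ap Pp k Jr0 in auto)
  also have "\<dots> = 3/(2* sqrt \<sigma>)*P*Ir" using a k r sq by (simp add: field_simps)
  finally have s3: "Ia*Jr \<le> 3/(2* sqrt \<sigma>)*P*Ir" .
  define C where "C = 1 + 3/(2*\<sigma>* sqrt \<sigma>)"
  have Cs: "C*\<sigma> = \<sigma> + 3/(2* sqrt \<sigma>)" unfolding C_def using \<sigma> sq by (simp add: field_simps)
  have D: "\<sigma>*P*Kr \<le> \<sigma>*P*Kr - Ia*Kd" using Ia Kd by (simp add: mult_nonneg_nonpos)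
  have Dp: "0 < \<sigma>*P*Kr" using \<sigma> Pp Kr by simp
  have "\<bar>\<sigma>*P*Ir - Ia*Jr\<bar> \<le> \<sigma>*P*Ir + Ia*Jr" using \<sigma> Pp Ir Ia Jr0 by (simp add: abs_le_iff) 
  also have "\<dots> \<le> \<sigma>*P*Ir + 3/(2* sqrt \<sigma>)*P*Ir" using s3 by simp
  also have "\<dots> = C*\<sigma>*P*Ir" by (simp add: Cs distrib_right)
  finally have N: "\<bar>\<sigma>*P*Ir - Ia*Jr\<bar> \<le> C*\<sigma>*P*Ir" .
  have C0: "0 \<le> C*\<sigma>*P*Ir" unfolding C_def using \<sigma> Pp Ir sq by simp
  have "\<bar>(\<sigma>*P*Ir - Ia*Jr)/(\<sigma>*P*Kr - Ia*Kd)\<bar> = \<bar>\<sigma>*P*Ir - Ia*Jr\<bar>/(\<sigma>*P*Kr - Ia*Kd)"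
    using D Dp by (simp add: abs_divide)
  also have "\<dots> \<le> C*\<sigma>*P*Ir/(\<sigma>*P*Kr - Ia*Kd)" using N D Dp by (simp add: divide_right_mono)
  also have "\<dots> \<le> C*\<sigma>*P*Ir/(\<sigma>*P*Kr)"
  proof (rule divide_left_mono[OF D C0])
    have "0 < \<sigma>*P*Kr - Ia*Kd" using D Dp by linarith
    then show "0 < (\<sigma>*P*Kr - Ia*Kd) * (\<sigma>*P*Kr)" using Dp by simp
  qed
  also have "\<dots> = C*Ir/Kr" using \<sigma> Pp Kr by (simp add: field_simps)
  finally show ?thesis unfolding C_def .
qed

lemma rho0_real:
  fixes \<sigma> r a Ia Ir P Jr Kr Kd L1 :: real
  assumes \<sigma>: "0 < \<sigma>" and r: "0 < r" and a: "a = r / sqrt \<sigma>"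
    and Ia: "0 < Ia" and Ir: "0 < Ir" and P0: "0 \<le> P" and P: "P \<le> a/2*Ia" and Jr0: "0 \<le> Jr" and Jr: "Jr \<le> r/2*Ir"
    and Kr: "0 \<le> Kr" and L1: "0 < L1" and L1K: "L1 \<le> - Kd"
  shows "\<bar>(\<sigma>*P*Ir - Ia*Jr)/(\<sigma>*P*Kr - Ia*Kd)\<bar> \<le> (sqrt \<sigma> + 1)/2 * r * Ir / L1"
proof -
  have sq: "0 < sqrt \<sigma>" using \<sigma> by simp
  have ss: "sqrt \<sigma> * sqrt \<sigma> = \<sigma>" using \<sigma> by simp
  have "\<sigma>*a = (sqrt \<sigma> * sqrt \<sigma>) * (r / sqrt \<sigma>)" using ss a by simp
  also have "\<dots> = r * sqrt \<sigma>" using sq by (simp add: field_simps)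
  finally have sa: "\<sigma>*a = r* sqrt \<sigma>" .
  have "\<bar>\<sigma>*P*Ir - Ia*Jr\<bar> \<le> \<sigma>*P*Ir + Ia*Jr" using \<sigma> P0 Ir Ia Jr0 by (simp add: abs_le_iff)
  also have "\<dots> \<le> \<sigma>*(a/2*Ia)*Ir + Ia*(r/2*Ir)"
    using P Jr \<sigma> Ir Ia by (intro add_mono mult_right_mono mult_left_mono) auto
  also have "\<dots> = Ia*((sqrt \<sigma> + 1)/2 * r * Ir)" using sa by (simp add: algebra_simps)
  finally have N: "\<bar>\<sigma>*P*Ir - Ia*Jr\<bar> \<le> Ia*((sqrt \<sigma> + 1)/2 * r * Ir)" .
  have D: "Ia*L1 \<le> \<sigma>*P*Kr - Ia*Kd"
  proof -
    have "Ia*L1 \<le> Ia*(-Kd)" by (rule mult_left_mono[OF L1K]) (use Ia in simp)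
    moreover have "0 \<le> \<sigma>*P*Kr" using \<sigma> P0 Kr by simp
    ultimately show ?thesis by simp
  qed
  have Dp: "0 < Ia*L1" using Ia L1 by simp
  have N0: "0 \<le> Ia*((sqrt \<sigma> + 1)/2 * r * Ir)" using Ia sq r Ir by simp
  have "\<bar>(\<sigma>*P*Ir - Ia*Jr)/(\<sigma>*P*Kr - Ia*Kd)\<bar> = \<bar>\<sigma>*P*Ir - Ia*Jr\<bar>/(\<sigma>*P*Kr - Ia*Kd)"
    using D Dp by (simp add: abs_divide)
  also have "\<dots> \<le> Ia*((sqrt \<sigma> + 1)/2 * r * Ir)/(\<sigma>*P*Kr - Ia*Kd)"
    by (rule divide_right_mono[OF N]) (use D Dp in linarith)
  also have "\<dots> \<le> Ia*((sqrt \<sigma> + 1)/2 * r * Ir)/(Ia*L1)" by (rule divide_left_mono[OF D N0]) (use Dp D in simp)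
  also have "\<dots> = (sqrt \<sigma> + 1)/2 * r * Ir / L1" using Ia by simp
  finally show ?thesis .
qed


section \<open>Estimates for the coefficients rho\<close>

lemma rho_tail:
  assumes k: "1 \<le> k" and \<sigma>: "0 < \<sigma>" and r: "0 < r" "r \<le> 1"
  shows "\<bar>rho \<sigma> r (int k)\<bar> \<le> (1 + 3/(2*\<sigma> * sqrt \<sigma>)) * (r^k * bessel_I (int k) 1 / bessel_K (int k) 1)"
proof -
  define a where "a = r / sqrt \<sigma>"
  have ap: "0 < a" unfolding a_def using r \<sigma> by simp
  have Kd: "bessel_K' (int k) r \<le> 0" using L_pos[OF r(1), of k] by simp
  have b: "\<bar>rho \<sigma> r (int k)\<bar> \<le> (1 + 3/(2*\<sigma> * sqrt \<sigma>)) * bessel_I (int k) r / bessel_K (int k) r"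
    unfolding rho_def a_def[symmetric]
    by (rule rho_bound_real[OF \<sigma> r(1) r(2) a_def, of "real k"])
       (use k ap r Kd J_lower[OF ap, of k] J_upper[OF r(1), of k] J_pos[OF r(1), of k] in \<open>auto simp: I_pos K_pos less_imp_le\<close>)
  have "bessel_I (int k) r / bessel_K (int k) r \<le> (r^k * bessel_I (int k) 1) / bessel_K (int k) 1"
    by (rule frac_le) (use I_scale[OF r, of k] I_pos[OF r(1), of k] K_pos[of 1 k] K_mono[OF r(1) r(2), of k] r in auto)
  then have "(1 + 3/(2*\<sigma> * sqrt \<sigma>)) * (bessel_I (int k) r / bessel_K (int k) r)
      \<le> (1 + 3/(2*\<sigma> * sqrt \<sigma>)) * (r^k * bessel_I (int k) 1 / bessel_K (int k) 1)"
    by (rule mult_left_mono) (use \<sigma> in simp)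
  then show ?thesis using b by simp
qed

lemma rho0_bound:
  assumes \<sigma>: "0 < \<sigma>" and r: "0 < r" "r \<le> 1"
  shows "\<bar>rho \<sigma> r 0\<bar> \<le> (sqrt \<sigma> + 1)/2 * r * bessel_I 0 1 / (- bessel_K' 0 1)"
proof -
  define a where "a = r / sqrt \<sigma>"
  have ap: "0 < a" unfolding a_def using r \<sigma> by simp
  have L1: "0 < - bessel_K' 0 1" using L_pos[of 1 0] by simp
  have L1K: "- bessel_K' 0 1 \<le> - bessel_K' 0 r" using L_mono[OF r(1) r(2), of 0] by simp
  have Ja: "bessel_I' 0 a \<le> a/2 * bessel_I 0 a" using J_upper[OF ap, of 0] by simp
  have Jr: "bessel_I' 0 r \<le> r/2 * bessel_I 0 r" using J_upper[OF r(1), of 0] by simp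
  have b: "\<bar>rho \<sigma> r 0\<bar> \<le> (sqrt \<sigma> + 1)/2 * r * bessel_I 0 r / (- bessel_K' 0 1)"
    unfolding rho_def a_def[symmetric]
    by (rule rho0_real[OF \<sigma> r(1) a_def _ _ _ Ja _ Jr _ L1 L1K])
       (use ap r J_pos[OF ap, of 0] J_pos[OF r(1), of 0] I_pos[OF ap, of 0] I_pos[OF r(1), of 0] K_pos[OF r(1), of 0] in auto)
  have "bessel_I 0 r \<le> bessel_I 0 1" using I_scale[OF r, of 0] by simp
  then have "(sqrt \<sigma> + 1)/2 * r * bessel_I 0 r / (- bessel_K' 0 1) \<le> (sqrt \<sigma> + 1)/2 * r * bessel_I 0 1 / (- bessel_K' 0 1)"
    using L1 r \<sigma> by (intro divide_right_mono mult_left_mono) auto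
  then show ?thesis using b by linarith
qed

lemma mlt_lim1:
  assumes r: "0 < r" "r < 1"
  shows "((\<lambda>\<sigma>. mlt \<sigma> r (int k)) \<longlongrightarrow> 0) (at 1 within {0<..})"
proof -
  let ?F = "at (1::real) within {0<..}"
  have Jfun: "bessel_I' (int k) = Idf k" using bessel_I'_eq by blast
  have cI: "isCont (bessel_I (int k)) x" for x using DERIV_isCont[OF I_deriv] .
  have cJ: "isCont (bessel_I' (int k)) x" for x unfolding Jfun by (rule Idf_cont)
  have "((\<lambda>\<sigma>. r / sqrt \<sigma>) \<longlongrightarrow> r / sqrt 1) ?F"
    by (intro tendsto_intros) auto
  then have a: "((\<lambda>\<sigma>. r / sqrt \<sigma>) \<longlongrightarrow> r) ?F" by simp
  have Ia: "((\<lambda>\<sigma>. bessel_I (int k) (r / sqrt \<sigma>)) \<longlongrightarrow> bessel_I (int k) r) ?F"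
    by (rule isCont_tendsto_compose[OF cI a])
  have Ja: "((\<lambda>\<sigma>. bessel_I' (int k) (r / sqrt \<sigma>)) \<longlongrightarrow> bessel_I' (int k) r) ?F"
    by (rule isCont_tendsto_compose[OF cJ a])
  have N: "((\<lambda>\<sigma>. \<sigma> * bessel_I' (int k) (r / sqrt \<sigma>) * bessel_I (int k) r - bessel_I (int k) (r / sqrt \<sigma>) * bessel_I' (int k) r)
      \<longlongrightarrow> 1 * bessel_I' (int k) r * bessel_I (int k) r - bessel_I (int k) r * bessel_I' (int k) r) ?F"
    by (intro tendsto_intros Ia Ja)
  have D: "((\<lambda>\<sigma>. \<sigma> * bessel_I' (int k) (r / sqrt \<sigma>) * bessel_K (int k) r - bessel_I (int k) (r / sqrt \<sigma>) * bessel_K' (int k) r)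
      \<longlongrightarrow> 1 * bessel_I' (int k) r * bessel_K (int k) r - bessel_I (int k) r * bessel_K' (int k) r) ?F"
    by (intro tendsto_intros Ia Ja)
  have Dpos: "0 < 1 * bessel_I' (int k) r * bessel_K (int k) r - bessel_I (int k) r * bessel_K' (int k) r"
  proof -
    have "0 < bessel_I' (int k) r * bessel_K (int k) r" using J_pos[OF r(1)] K_pos[OF r(1)] by simp
    moreover have "bessel_K' (int k) r < 0" using L_pos[OF r(1), of k] by simp
    then have "bessel_I (int k) r * bessel_K' (int k) r < 0" by (rule mult_pos_neg[OF I_pos[OF r(1)]])
    ultimately show ?thesis by simp
  qed
  have R: "((\<lambda>\<sigma>. rho \<sigma> r (int k)) \<longlongrightarrow> 0) ?F"
    unfolding rho_def using tendsto_divide[OF N D] Dpos by simp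
  have J1: "0 < bessel_I' (int k) 1" using J_pos[of 1 k] by simp
  have "((\<lambda>\<sigma>. mlt \<sigma> r (int k)) \<longlongrightarrow>
      (0 * bessel_K (int k) 1 - bessel_I (int k) 1) / (0 * bessel_K' (int k) 1 - bessel_I' (int k) 1)
       - bessel_I (int k) 1 / bessel_I' (int k) 1) ?F"
    unfolding mlt_def using J1 by (intro tendsto_intros R) auto
  then show ?thesis using J1 by simp
qed


lemma part1:
  assumes r: "0 < r" "r < 1"
  shows "((\<lambda>\<sigma>1. opnorm_Hm_H (\<lambda>g. NtD_core \<sigma>1 r g - NtD_hom g)) \<longlongrightarrow> 0) (at 1 within {0<..})"
proof -
  let ?F = "at (1::real) within {0<..}"
  have main: "eventually (\<lambda>\<sigma>. \<forall>k::nat. sqrt (1 + (real k)\<^sup>2) * \<bar>mlt \<sigma> r (int k)\<bar> \<le> \<epsilon>) ?F"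
    if \<epsilon>: "\<epsilon> > 0" for \<epsilon>
  proof -
    define \<delta> where "\<delta> = min (1/14) (\<epsilon>/84)"
    have \<delta>: "0 < \<delta>" using \<epsilon> by (simp add: \<delta>_def)
    have lim: "(\<lambda>k. (real k + 1) * r^k) \<longlonglongrightarrow> 0"
    proof -
      have "(\<lambda>k. real k * r^k + r^k) \<longlonglongrightarrow> 0 + 0"
        using r by (intro tendsto_add powser_times_n_limit_0 LIMSEQ_power_zero) auto
      then show ?thesis by (simp add: distrib_right)
    qed
    obtain N0 where N0: "\<And>k. k \<ge> N0 \<Longrightarrow> (real k + 1) * r^k < \<delta>"
      using order_tendstoD(2)[OF lim \<delta>] unfolding eventually_sequentially by blast
    define N where "N = max N0 1"
    have ev1: "eventually (\<lambda>\<sigma>. 0 < \<sigma> \<and> 1/2 \<le> \<sigma> \<and> \<sigma> \<le> 2) ?F"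
      unfolding eventually_at by (intro exI[of _ "1/2"]) (auto simp: dist_real_def split: abs_split)
    have ev2: "eventually (\<lambda>\<sigma>. \<forall>k\<in>{..<N}. sqrt (1 + (real k)\<^sup>2) * \<bar>mlt \<sigma> r (int k)\<bar> \<le> \<epsilon>) ?F"
    proof (rule eventually_ball_finite)
      show "finite {..<N}" by simp
      show "\<forall>k\<in>{..<N}. eventually (\<lambda>\<sigma>. sqrt (1 + (real k)\<^sup>2) * \<bar>mlt \<sigma> r (int k)\<bar> \<le> \<epsilon>) ?F"
      proof
        fix k :: nat
        have sp: "0 < sqrt (1 + (real k)\<^sup>2)" by (simp add: add_pos_nonneg)
        have "((\<lambda>\<sigma>. \<bar>mlt \<sigma> r (int k)\<bar>) \<longlongrightarrow> 0) ?F" using tendsto_rabs_zero[OF mlt_lim1[OF r]] .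
        then have "eventually (\<lambda>\<sigma>. \<bar>mlt \<sigma> r (int k)\<bar> < \<epsilon> / sqrt (1 + (real k)\<^sup>2)) ?F"
          using \<epsilon> sp by (intro order_tendstoD(2)) auto
        then show "eventually (\<lambda>\<sigma>. sqrt (1 + (real k)\<^sup>2) * \<bar>mlt \<sigma> r (int k)\<bar> \<le> \<epsilon>) ?F"
          by (rule eventually_mono) (use sp in \<open>simp add: field_simps\<close>)
      qed
    qed
    show ?thesis
    proof (rule eventually_mono[OF eventually_conj[OF ev1 ev2]])
      fix \<sigma> assume H: "(0 < \<sigma> \<and> 1/2 \<le> \<sigma> \<and> \<sigma> \<le> 2) \<and> (\<forall>k\<in>{..<N}. sqrt (1 + (real k)\<^sup>2) * \<bar>mlt \<sigma> r (int k)\<bar> \<le> \<epsilon>)"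
      then have \<sigma>: "0 < \<sigma>" "1/2 \<le> \<sigma>" by auto
      show "\<forall>k::nat. sqrt (1 + (real k)\<^sup>2) * \<bar>mlt \<sigma> r (int k)\<bar> \<le> \<epsilon>"
      proof
        fix k :: nat
        show "sqrt (1 + (real k)\<^sup>2) * \<bar>mlt \<sigma> r (int k)\<bar> \<le> \<epsilon>"
        proof (cases "k < N")
          case True then show ?thesis using H by auto
        next
          case False
          then have k1: "1 \<le> k" and kN0: "N0 \<le> k" unfolding N_def by auto
          have small: "(real k + 1) * r^k < \<delta>" using N0[OF kN0] .
          have rk0: "0 \<le> r^k" using r by simp
          have C7: "1 + 3/(2*\<sigma> * sqrt \<sigma>) \<le> 7"
          proof -
            have "1/2 \<le> sqrt (1/2::real)" by (rule real_le_rsqrt) (simp add: power2_eq_square)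
            also have "\<dots> \<le> sqrt \<sigma>" using \<sigma> by simp
            finally have s: "1/2 \<le> sqrt \<sigma>" .
            have "(1/2) * (1/2) \<le> \<sigma> * sqrt \<sigma>" by (rule mult_mono[OF \<sigma>(2) s]) (use \<sigma> in auto)
            then have "1/2 \<le> 2*\<sigma> * sqrt \<sigma>" by simp
            then have "3/(2*\<sigma> * sqrt \<sigma>) \<le> 3/(1/2)" by (intro divide_left_mono) auto
            then show ?thesis by simp
          qed
          define \<tau> where "\<tau> = 7 * r^k"
          have \<rho>b: "\<bar>rho \<sigma> r (int k)\<bar> \<le> \<tau> * bessel_I (int k) 1 / bessel_K (int k) 1"
          proof -
            have "\<bar>rho \<sigma> r (int k)\<bar> \<le> (1 + 3/(2*\<sigma> * sqrt \<sigma>)) * (r^k * bessel_I (int k) 1 / bessel_K (int k) 1)"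
              by (rule rho_tail[OF k1 \<sigma>(1) r(1)]) (use r in simp)
            also have "\<dots> \<le> 7 * (r^k * bessel_I (int k) 1 / bessel_K (int k) 1)"
              by (rule mult_right_mono[OF C7]) (use rk0 I_pos[of 1 k] K_pos[of 1 k] in simp)
            finally show ?thesis unfolding \<tau>_def by simp
          qed
          have \<tau>0: "0 \<le> \<tau>" unfolding \<tau>_def using rk0 by simp
          have \<tau>k: "\<tau> * (real k + 1) \<le> real k / 2"
          proof -
            have "\<tau> * (real k + 1) = 7 * ((real k + 1) * r^k)" unfolding \<tau>_def by simp
            also have "\<dots> \<le> 7 * \<delta>" using small by simp
            also have "\<dots> \<le> 1/2" unfolding \<delta>_def by simp
            also have "\<dots> \<le> real k / 2" using k1 by simp
            finally show ?thesis .
          qed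
          have "sqrt (1 + (real k)\<^sup>2) * \<bar>mlt \<sigma> r (int k)\<bar> \<le> 12 * \<tau>"
            unfolding mlt_def
            by (rule tail_real[OF _ _ _ _ _ _ \<rho>b \<tau>0 \<tau>k])
               (use k1 I_pos[of 1 k] J_lower[of 1 k] K_pos[of 1 k] L_pos[of 1 k] L_rec1[OF k1] in auto)
          also have "\<dots> = 84 * r^k" unfolding \<tau>_def by simp
          also have "\<dots> \<le> 84 * ((real k + 1) * r^k)" using rk0 by (simp add: mult_le_cancel_right1 algebra_simps)
          also have "\<dots> \<le> 84 * \<delta>" using small by simp
          also have "\<dots> \<le> \<epsilon>" unfolding \<delta>_def by simp
          finally show ?thesis .
        qed
      qed
    qed
  qed
  show ?thesis using tendsto_from_unif[where \<sigma>="\<lambda>p. p" and r="\<lambda>p. r" and F="?F", OF main] by simp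
qed

lemma part2:
  assumes \<sigma>: "0 < \<sigma>"
  shows "((\<lambda>r1. opnorm_Hm_H (\<lambda>g. NtD_core \<sigma> r1 g - NtD_hom g)) \<longlongrightarrow> 0) (at 0 within {0<..<1})"
proof -
  let ?F = "at (0::real) within {0<..<1}"
  define C where "C = 1 + 3/(2*\<sigma> * sqrt \<sigma>)"
  have C: "0 < C" unfolding C_def using \<sigma> by (simp add: add_pos_nonneg)
  define I0 where "I0 = bessel_I 0 1"
  define J0 where "J0 = bessel_I' 0 1"
  define K0 where "K0 = bessel_K 0 1"
  define L0 where "L0 = - bessel_K' 0 1"
  have I0: "0 < I0" unfolding I0_def using I_pos[of 1 0] by simp
  have J0: "0 < J0" unfolding J0_def using J_pos[of 1 0] by simp
  have K0: "0 < K0" unfolding K0_def using K_pos[of 1 0] by simp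
  have L0: "0 < L0" unfolding L0_def using L_pos[of 1 0] by simp
  define c0 where "c0 = (sqrt \<sigma> + 1)/2 * I0 / L0"
  have c0: "0 < c0" unfolding c0_def using I0 L0 \<sigma> by (simp add: add_pos_nonneg)
  define Q0 where "Q0 = (K0*J0 + L0*I0)/J0\<^sup>2"
  have Q0: "0 < Q0" unfolding Q0_def using I0 J0 K0 L0 by (simp add: add_pos_pos)
  have main: "eventually (\<lambda>r. \<forall>k::nat. sqrt (1 + (real k)\<^sup>2) * \<bar>mlt \<sigma> r (int k)\<bar> \<le> \<epsilon>) ?F"
    if \<epsilon>: "\<epsilon> > 0" for \<epsilon>
  proof -
    define \<delta> where "\<delta> = min (min (1/(4*C)) (\<epsilon>/(12*C))) (min (J0/(2*c0*L0)) (\<epsilon>/(2*c0*Q0)))"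
    have \<delta>: "0 < \<delta>" unfolding \<delta>_def using C \<epsilon> c0 L0 J0 Q0 by simp
    have ev: "eventually (\<lambda>r. 0 < r \<and> r < 1 \<and> r < \<delta>) ?F"
      unfolding eventually_at using \<delta> by (intro exI[of _ \<delta>]) (auto simp: dist_real_def)
    show ?thesis
    proof (rule eventually_mono[OF ev])
      fix r assume "0 < r \<and> r < 1 \<and> r < \<delta>"
      then have r: "0 < r" "r \<le> 1" and rd: "r < \<delta>" by auto
      have rC1: "C * r \<le> 1/4"
      proof -
        have "r \<le> 1/(4*C)" using rd unfolding \<delta>_def by simp
        then show ?thesis using C by (simp add: field_simps)
      qed
      have rC2: "12 * (C * r) \<le> \<epsilon>"
      proof -
        have "r \<le> \<epsilon>/(12*C)" using rd unfolding \<delta>_def by simp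
        then show ?thesis using C by (simp add: field_simps)
      qed
      have r0L: "c0 * r * L0 \<le> J0/2"
      proof -
        have "r \<le> J0/(2*c0*L0)" using rd unfolding \<delta>_def by simp
        then show ?thesis using c0 L0 by (simp add: field_simps)
      qed
      have r0Q: "2 * (c0 * r) * Q0 \<le> \<epsilon>"
      proof -
        have "r \<le> \<epsilon>/(2*c0*Q0)" using rd unfolding \<delta>_def by simp
        then show ?thesis using c0 Q0 by (simp add: field_simps)
      qed
      show "\<forall>k::nat. sqrt (1 + (real k)\<^sup>2) * \<bar>mlt \<sigma> r (int k)\<bar> \<le> \<epsilon>"
      proof
        fix k :: nat
        show "sqrt (1 + (real k)\<^sup>2) * \<bar>mlt \<sigma> r (int k)\<bar> \<le> \<epsilon>"
        proof (cases "k = 0")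
          case True
          have \<rho>0: "\<bar>rho \<sigma> r 0\<bar> \<le> c0 * r"
            using rho0_bound[OF \<sigma> r] unfolding c0_def I0_def L0_def by (simp add: mult_ac)
          have sm: "\<bar>rho \<sigma> r 0\<bar> * (- bessel_K' 0 1) \<le> bessel_I' 0 1 / 2"
          proof -
            have "\<bar>rho \<sigma> r 0\<bar> * L0 \<le> (c0 * r) * L0" by (rule mult_right_mono[OF \<rho>0]) (use L0 in simp)
            then show ?thesis using r0L unfolding L0_def J0_def by simp
          qed
          have Kd0: "bessel_K' 0 1 \<le> 0" using L0 unfolding L0_def by simp
          have "\<bar>mlt \<sigma> r 0\<bar> \<le> 2*\<bar>rho \<sigma> r 0\<bar>*(K0*J0 + L0*I0)/J0\<^sup>2"
            unfolding mlt_def K0_def J0_def L0_def I0_def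
            by (rule mult_bound_real[OF _ _ _ Kd0 sm]) (use I0 J0 K0 in \<open>auto simp: I0_def J0_def K0_def\<close>)
          also have "\<dots> = 2*\<bar>rho \<sigma> r 0\<bar>*Q0" unfolding Q0_def by simp
          also have "\<dots> \<le> 2*(c0 * r)*Q0" using \<rho>0 Q0 by (simp add: mult_right_mono)
          also have "\<dots> \<le> \<epsilon>" by (rule r0Q)
          finally show ?thesis using True by simp
        next
          case False
          then have k1: "1 \<le> k" by simp
          define \<tau> where "\<tau> = C * r^k"
          have rk0: "0 \<le> r^k" using r by simp
          have rk: "r^k \<le> r" using power_decreasing[OF k1, of r] r by simp
          have \<rho>b: "\<bar>rho \<sigma> r (int k)\<bar> \<le> \<tau> * bessel_I (int k) 1 / bessel_K (int k) 1"
            using rho_tail[OF k1 \<sigma> r] unfolding \<tau>_def C_def by (simp add: mult_ac)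
          have \<tau>0: "0 \<le> \<tau>" unfolding \<tau>_def using C rk0 by simp
          have \<tau>r: "\<tau> \<le> C * r" unfolding \<tau>_def using rk C by simp
          have \<tau>k: "\<tau> * (real k + 1) \<le> real k / 2"
          proof -
            have "\<tau> * (real k + 1) \<le> (C * r) * (2 * real k)"
              by (rule mult_mono[OF \<tau>r]) (use k1 C r in auto)
            also have "\<dots> \<le> (1/4) * (2 * real k)" by (rule mult_right_mono[OF rC1]) simp
            finally show ?thesis by simp
          qed
          have "sqrt (1 + (real k)\<^sup>2) * \<bar>mlt \<sigma> r (int k)\<bar> \<le> 12 * \<tau>"
            unfolding mlt_def
            by (rule tail_real[OF _ _ _ _ _ _ \<rho>b \<tau>0 \<tau>k])
               (use k1 I_pos[of 1 k] J_lower[of 1 k] K_pos[of 1 k] L_pos[of 1 k] L_rec1[OF k1] in auto)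
          also have "\<dots> \<le> 12 * (C * r)" using \<tau>r by simp
          also have "\<dots> \<le> \<epsilon>" by (rule rC2)
          finally show ?thesis .
        qed
      qed
    qed
  qed
  show ?thesis using tendsto_from_unif[where \<sigma>="\<lambda>p. \<sigma>" and r="\<lambda>p. p" and F="?F", OF main] by simp
qed

theorem theorem2p1:
  shows "(\<forall>r1. 0 < r1 \<and> r1 < 1 \<longrightarrow>
           ((\<lambda>\<sigma>1. opnorm_Hm_H (\<lambda>g. NtD_core \<sigma>1 r1 g - NtD_hom g)) \<longlongrightarrow> 0) (at 1 within {0<..}))
       \<and> (\<forall>\<sigma>1. 0 < \<sigma>1 \<longrightarrow>
           ((\<lambda>r1. opnorm_Hm_H (\<lambda>g. NtD_core \<sigma>1 r1 g - NtD_hom g)) \<longlongrightarrow> 0) (at 0 within {0<..<1}))"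
  using part1 part2 by blast

end
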